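(* For $\tau$ in the upper half plane and $z\in\mathbb{C}$, with $q=e^{2\pi i\tau}$, $y=e^{2\pi i z}$ (and $q^{s}=e^{2\pi i s\tau}$), $$\theta_3(z|3\tau)^3+q^{1/2}y\,\theta_3(z+\tau|3\tau)^3+q^{2}y^{2}\,\theta_3(z+2\tau|3\tau)^3=a(\tau)\,\theta_3(z|\tau),$$ where $$a(\tau):=\frac{1}{\eta(\tau)}\sum_{n\in\mathbb{Z}}(-1)^n(6n+1)\,q^{(6n+1)^2/24}=\sum_{k,l\in\mathbb{Z}}q^{k^2+kl+l^2}$$ (in particular the two expressions for $a(\tau)$ are equal).
   Context: $\theta_3(z|\tau)=\sum_{n\in\mathbb{Z}}q^{n^2/2}y^n$ with $q^{s}=e^{2\pi i s\tau}$, $y=e^{2\pi i z}$. $\eta(\tau)=q^{1/24}\prod_{n\ge1}(1-q^n)$. *)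

theory Defs
  imports "HOL-Analysis.Analysis"
begin

definition qpow :: "complex \<Rightarrow> complex \<Rightarrow> complex" where
  "qpow tau s = exp (2 * pi * \<i> * s * tau)"

definition theta3 :: "complex \<Rightarrow> complex \<Rightarrow> complex" where
  "theta3 z tau = (\<Sum>\<^sub>\<infinity>n::int. qpow tau (of_int n ^ 2 / 2) * exp (2 * pi * \<i> * of_int n * z))"

definition dedekind_eta :: "complex \<Rightarrow> complex" where
  "dedekind_eta tau = qpow tau (1/24) * (\<Prod>n. 1 - qpow tau (of_nat (Suc n)))"

definition a_eta :: "complex \<Rightarrow> complex" where
  "a_eta tau = (1 / dedekind_eta tau) *
     (\<Sum>\<^sub>\<infinity>n::int. (-1) ^ nat \<bar>n\<bar> * of_int (6*n+1) * qpow tau (of_int ((6*n+1)^2) / 24))"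

definition a_lattice :: "complex \<Rightarrow> complex" where
  "a_lattice tau = (\<Sum>\<^sub>\<infinity>(k::int,l::int). qpow tau (of_int (k^2 + k*l + l^2)))"

end

theory Submission
  imports Defs
begin


lemma two_pow_ge: "real n + 1 \<le> 2 ^ n"
proof (induction n)
  case 0 then show ?case by simp
next
  case (Suc n)
  have "(1::real) \<le> 2 ^ n" by simp
  with Suc show ?case by simp
qed

lemma summ_nat_aux:
  fixes a b :: real assumes a0: "0 \<le> a" and a1: "a < 1" and b0: "0 \<le> b"
  shows "summable (\<lambda>n::nat. (real n + 1) * a^(n*n) * b^n)"
proof -
  have "(\<lambda>n. a^n * b) \<longlonglongrightarrow> 0 * b"
    by (intro tendsto_intros LIMSEQ_power_zero) (use a0 a1 in auto)
  then have "eventually (\<lambda>n. a^n * b < 1/4) sequentially"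
    by (intro order_tendstoD) auto
  then obtain M where M: "\<And>n. n \<ge> M \<Longrightarrow> a^n * b < 1/4"
    by (auto simp: eventually_sequentially)
  show ?thesis
  proof (rule summable_comparison_test_ev)
    show "summable (\<lambda>n. (1/2::real)^n)" by (rule summable_geometric) auto
    show "eventually (\<lambda>n. norm ((real n + 1) * a^(n*n) * b^n) \<le> (1/2)^n) sequentially"
      unfolding eventually_sequentially
    proof (intro exI allI impI)
      fix n assume "n \<ge> M"
      have "a^(n*n) * b^n = (a^n * b)^n" by (simp add: power_mult power_mult_distrib)
      also have "\<dots> \<le> (1/4)^n"
        using M[OF \<open>n \<ge> M\<close>] by (intro power_mono) (use a0 b0 in auto)
      finally have h: "a^(n*n) * b^n \<le> (1/4)^n" .
      have "norm ((real n + 1) * a^(n*n) * b^n) = (real n + 1) * (a^(n*n) * b^n)"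
        using a0 b0 by simp
      also have "\<dots> \<le> 2^n * (1/4)^n"
        by (intro mult_mono two_pow_ge h) (use a0 b0 in auto)
      also have "\<dots> = (1/2)^n" by (simp add: power_mult_distrib[symmetric])
      finally show "norm ((real n + 1) * a^(n*n) * b^n) \<le> (1/2)^n" .
    qed
  qed
qed

lemma int_abs_summableI:
  fixes g :: "int \<Rightarrow> 'a::banach"
  assumes "summable (\<lambda>n::nat. norm (g (int n)))" "summable (\<lambda>n::nat. norm (g (- int n)))"
  shows "(\<lambda>n. norm (g n)) summable_on UNIV"
proof -
  have "(\<lambda>n. norm (g n)) summable_on range int"
    by (subst summable_on_reindex) (use assms(1) in \<open>auto simp: o_def intro!: norm_summable_imp_summable_on\<close>)
  moreover have "(\<lambda>n. norm (g n)) summable_on range (\<lambda>n::nat. - int n)"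
    by (subst summable_on_reindex) (use assms(2) in \<open>auto simp: o_def inj_on_def intro!: norm_summable_imp_summable_on\<close>)
  ultimately have "(\<lambda>n. norm (g n)) summable_on (range int \<union> range (\<lambda>n::nat. - int n))"
    by (rule summable_on_union)
  also have "range int \<union> range (\<lambda>n::nat. - int n) = UNIV"
  proof -
    have "n \<in> range int \<union> range (\<lambda>n::nat. - int n)" for n :: int
    proof (cases "n \<ge> 0")
      case True then have "n = int (nat n)" by simp
      then show ?thesis by blast
    next
      case False then have "n = - int (nat (-n))" by simp
      then show ?thesis by blast
    qed
    then show ?thesis by blast
  qed
  finally show ?thesis .
qed


lemma theta_summable:
  fixes x y :: complex and w :: "int \<Rightarrow> complex"
  assumes x: "norm x < 1" and y: "y \<noteq> 0" and w: "\<And>n. norm (w n) \<le> 1 + of_int \<bar>n\<bar>"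
  shows "(\<lambda>n. norm (w n * x powi (n^2) * y powi n)) summable_on UNIV"
proof (rule int_abs_summableI)
  have S1: "summable (\<lambda>m::nat. (real m + 1) * norm x^(m*m) * norm y^m)"
    by (rule summ_nat_aux) (use x in auto)
  have B1: "norm (norm (w (int m) * x powi ((int m)^2) * y powi (int m))) \<le> (real m + 1) * norm x^(m*m) * norm y^m" for m :: nat
  proof -
    have e: "x powi ((int m)^2) = x^(m*m)" using power_int_of_nat[of x "m*m"] by (simp add: power2_eq_square)
    have "norm (norm (w (int m) * x powi ((int m)^2) * y powi (int m))) = norm (w (int m)) * (norm x^(m*m) * norm y^m)"
      unfolding e by (simp add: norm_mult norm_power)
    also have "\<dots> \<le> (real m + 1) * (norm x^(m*m) * norm y^m)"
      by (intro mult_right_mono) (use w[of "int m"] in auto)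
    finally show ?thesis by (simp add: mult.assoc)
  qed
  show "summable (\<lambda>m::nat. norm (w (int m) * x powi ((int m)^2) * y powi (int m)))"
    by (rule summable_comparison_test'[OF S1 B1])
  have S2: "summable (\<lambda>m::nat. (real m + 1) * norm x^(m*m) * norm (inverse y)^m)"
    by (rule summ_nat_aux) (use x in auto)
  have B2: "norm (norm (w (- int m) * x powi ((- int m)^2) * y powi (- int m))) \<le> (real m + 1) * norm x^(m*m) * norm (inverse y)^m" for m :: nat
  proof -
    have e: "x powi ((- int m)^2) = x^(m*m)" using power_int_of_nat[of x "m*m"] by (simp add: power2_eq_square)
    have "norm (norm (w (- int m) * x powi ((- int m)^2) * y powi (- int m))) = norm (w (- int m)) * (norm x^(m*m) * norm (inverse y)^m)"
      unfolding e by (simp add: norm_mult norm_power power_int_minus norm_inverse power_inverse)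
    also have "\<dots> \<le> (real m + 1) * (norm x^(m*m) * norm (inverse y)^m)"
      by (intro mult_right_mono) (use w[of "- int m"] in auto)
    finally show ?thesis by (simp add: mult.assoc)
  qed
  show "summable (\<lambda>m::nat. norm (w (- int m) * x powi ((- int m)^2) * y powi (- int m)))"
    by (rule summable_comparison_test'[OF S2 B2])
qed

lemma abs_summable_imp_summable:
  fixes f :: "'a \<Rightarrow> 'b::banach"
  shows "(\<lambda>n. norm (f n)) summable_on A \<Longrightarrow> f summable_on A"
  using abs_summable_summable by blast

lemma abs_summable_times:
  fixes f g :: "_ \<Rightarrow> complex"
  assumes f: "(\<lambda>i. norm (f i)) summable_on A" and g: "(\<lambda>j. norm (g j)) summable_on B"
  shows "(\<lambda>p. norm (case p of (i,j) \<Rightarrow> f i * g j)) summable_on (A \<times> B)"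
proof -
  have "(\<lambda>p. norm (case p of (i,j) \<Rightarrow> f i * g j)) summable_on Sigma A (\<lambda>_. B)"
  proof (rule iffD2[OF Infinite_Sum.abs_summable_on_Sigma_iff], intro conjI ballI)
    fix i assume "i \<in> A"
    show "(\<lambda>j. norm (case (i,j) of (i,j) \<Rightarrow> f i * g j)) summable_on B"
      using summable_on_cmult_right[OF g, of "norm (f i)"] by (simp add: norm_mult)
  next
    have "(\<lambda>i. norm (f i) * infsum (\<lambda>j. norm (g j)) B) summable_on A"
      using summable_on_cmult_left[OF f] by simp
    moreover have "infsum (\<lambda>j. norm (case (i,j) of (i,j) \<Rightarrow> f i * g j)) B = norm (f i) * infsum (\<lambda>j. norm (g j)) B" for i
      by (simp add: norm_mult infsum_cmult_right')
    ultimately show "(\<lambda>i. norm (infsum (\<lambda>j. norm (case (i,j) of (i,j) \<Rightarrow> f i * g j)) B)) summable_on A"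
      by (simp add: infsum_nonneg)
  qed
  then show ?thesis by simp
qed

lemma has_sum_times:
  fixes f g :: "_ \<Rightarrow> complex"
  assumes f: "(\<lambda>i. norm (f i)) summable_on A" and g: "(\<lambda>j. norm (g j)) summable_on B"
  shows "((\<lambda>(i,j). f i * g j) has_sum (infsum f A * infsum g B)) (A \<times> B)"
proof -
  have s: "(\<lambda>(i,j). f i * g j) summable_on (A \<times> B)"
    using abs_summable_summable[OF abs_summable_times[OF f g]] .
  have fs: "f summable_on A" and gs: "g summable_on B"
    using f g abs_summable_summable by blast+
  show ?thesis
  proof (rule has_sum_SigmaI[where g = "\<lambda>i. f i * infsum g B"])
    show "((\<lambda>j. case (i,j) of (i,j) \<Rightarrow> f i * g j) has_sum f i * infsum g B) B" if "i \<in> A" for i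
      using has_sum_cmult_right[OF has_sum_infsum[OF gs], of "f i"] by simp
    show "((\<lambda>i. f i * infsum g B) has_sum infsum f A * infsum g B) A"
      using has_sum_cmult_left[OF has_sum_infsum[OF fs], of "infsum g B"] by simp
    show "(\<lambda>(i,j). f i * g j) summable_on Sigma A (\<lambda>_. B)" using s by simp
  qed
qed


definition thE :: "complex \<Rightarrow> complex \<Rightarrow> complex" where
  "thE L M = (\<Sum>\<^sub>\<infinity>n::int. exp ((of_int n)^2 * L + of_int n * M))"

definition thdE :: "complex \<Rightarrow> complex \<Rightarrow> complex" where
  "thdE L M = (\<Sum>\<^sub>\<infinity>n::int. of_int n * exp ((of_int n)^2 * L + of_int n * M))"

definition LamE :: "complex \<Rightarrow> complex" where
  "LamE L = (\<Sum>\<^sub>\<infinity>(k::int,l::int). exp (of_int (k^2 + k*l + l^2) * (2*L)))"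

lemma exp_term_eq: "exp ((of_int n)^2 * L + of_int n * M) = exp L powi (n^2) * exp M powi n" for L M :: complex
  by (simp add: exp_power_int exp_add mult.commute)

lemma thE_summable:
  assumes L: "Re L < 0" and w: "\<And>n. norm (w n) \<le> 1 + of_int \<bar>n\<bar>"
  shows "(\<lambda>n. norm (w n * exp ((of_int n)^2 * L + of_int n * M))) summable_on UNIV"
proof -
  have "(\<lambda>n. norm (w n * exp L powi (n^2) * exp M powi n)) summable_on UNIV"
    by (rule theta_summable) (use L w in auto)
  then show ?thesis by (simp add: exp_term_eq mult.assoc)
qed

lemma thE_summable1:
  assumes L: "Re L < 0"
  shows "(\<lambda>n. norm (exp ((of_int n)^2 * L + of_int n * M))) summable_on UNIV"
  using thE_summable[OF L, of "\<lambda>_. 1" M] by simp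

lemma thdE_summable1:
  assumes L: "Re L < 0"
  shows "(\<lambda>n. norm (of_int n * exp ((of_int n)^2 * L + of_int n * M))) summable_on UNIV"
  using thE_summable[OF L, of "\<lambda>n. of_int n" M] by simp

lemma Lam_summable:
  assumes L: "Re L < 0"
  shows "(\<lambda>p. norm (case p of (k,l) \<Rightarrow> exp (of_int (k^2 + k*l + l^2) * (2*L)))) summable_on (UNIV :: (int \<times> int) set)"
proof -
  have s: "(\<lambda>p. norm (case p of (k,l) \<Rightarrow> exp ((of_int k)^2 * L) * exp ((of_int l)^2 * L))) summable_on (UNIV :: (int \<times> int) set)"
    using abs_summable_times[OF thE_summable1[OF L, of 0] thE_summable1[OF L, of 0]] by simp
  show ?thesis
  proof (rule summable_on_comparison_test[OF s])
    fix p :: "int \<times> int"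
    obtain k l where p: "p = (k,l)" by (cases p)
    have q: "real_of_int (k^2) + of_int (l^2) \<le> 2 * of_int (k^2 + k*l + l^2)"
    proof -
      have "0 \<le> (of_int k + of_int l :: real)^2" by simp
      then show ?thesis by (simp add: power2_eq_square algebra_simps)
    qed
    have "norm (exp (of_int (k^2 + k*l + l^2) * (2*L))) = exp (2 * of_int (k^2 + k*l + l^2) * Re L)"
      by simp
    also have "\<dots> \<le> exp ((of_int (k^2) + of_int (l^2)) * Re L)"
      using q L by (intro exp_mono mult_right_mono_neg) auto
    also have "\<dots> = norm (exp ((of_int k)^2 * L) * exp ((of_int l)^2 * L))"
      by (simp add: norm_mult exp_add[symmetric] algebra_simps)
    finally show "norm (case p of (k,l) \<Rightarrow> exp (of_int (k^2 + k*l + l^2) * (2*L))) \<le> norm (case p of (k,l) \<Rightarrow> exp ((of_int k)^2 * L) * exp ((of_int l)^2 * L))"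
      by (simp add: p)
  qed auto
qed

lemma has_sum_times3:
  fixes f g h :: "int \<Rightarrow> complex"
  assumes f: "(\<lambda>i. norm (f i)) summable_on UNIV" and g: "(\<lambda>i. norm (g i)) summable_on UNIV"
    and h: "(\<lambda>i. norm (h i)) summable_on UNIV"
  shows "((\<lambda>(a,b,c). f a * g b * h c) has_sum (infsum f UNIV * infsum g UNIV * infsum h UNIV)) UNIV"
proof -
  have gh: "((\<lambda>(b,c). g b * h c) has_sum (infsum g UNIV * infsum h UNIV)) (UNIV \<times> UNIV)"
    by (rule has_sum_times[OF g h])
  have ghs: "(\<lambda>p. norm (case p of (b,c) \<Rightarrow> g b * h c)) summable_on (UNIV \<times> UNIV)"
    by (rule abs_summable_times[OF g h])
  have "((\<lambda>(a,p). f a * (case p of (b,c) \<Rightarrow> g b * h c)) has_sum (infsum f UNIV * infsum (\<lambda>p. case p of (b,c) \<Rightarrow> g b * h c) UNIV)) (UNIV \<times> UNIV)"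
    by (rule has_sum_times[OF f]) (use ghs in simp)
  moreover have "infsum (\<lambda>p. case p of (b,c) \<Rightarrow> g b * h c) UNIV = infsum g UNIV * infsum h UNIV"
    using infsumI[OF gh] by simp
  ultimately show ?thesis by (simp add: case_prod_unfold mult.assoc)
qed


definition Psi :: "int \<times> int \<times> int \<times> int \<Rightarrow> int \<times> int \<times> int" where
  "Psi = (\<lambda>(j,n1,n2,n3). (n1+n2+n3+j, n1-n3, n2-n1))"

definition Phi :: "int \<times> int \<times> int \<Rightarrow> int \<times> int \<times> int \<times> int" where
  "Phi = (\<lambda>(N,k,l). ((N+k-l) mod 3, (N+k-l) div 3, (N+k+2*l) div 3, (N-2*k-l) div 3))"

lemma Phi_Psi: "j \<in> {0,1,2} \<Longrightarrow> Phi (Psi (j,n1,n2,n3)) = (j,n1,n2,n3)"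
  unfolding Phi_def Psi_def by auto

lemma Psi_Phi: "Psi (Phi (N,k,l)) = (N,k,l)"
proof -
  define m where "m = N+k-l"
  have a: "N+k+2*l = m + l*3" and b: "N-2*k-l = m + (-k)*3" by (simp_all add: m_def)
  have "(m + l*3) div 3 = m div 3 + l" by simp
  moreover have "(m + (-k)*3) div 3 = m div 3 - k" by simp
  moreover have "3 * (m div 3) + m mod 3 = m" by simp
  ultimately show ?thesis unfolding Phi_def Psi_def by (simp add: a b flip: m_def) (simp add: m_def)
qed

lemma Phi_in: "fst (Phi b) \<in> {0,1,2}"
proof -
  obtain N k l where b: "b = (N,k,l)" by (cases b) auto
  have "(N+k-l) mod 3 \<ge> 0" "(N+k-l) mod 3 < 3" by simp_all
  then have "(N+k-l) mod 3 \<in> {0,1,2}" by auto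
  then show ?thesis by (simp add: Phi_def b)
qed


definition aJ :: "complex \<Rightarrow> complex \<Rightarrow> int \<Rightarrow> int \<Rightarrow> complex" where
  "aJ L M j n = exp ((of_int n)^2 * (3*L) + of_int n * (M + 2 * of_int j * L))"

lemma exponent_identity:
  fixes L M :: complex and j n1 n2 n3 :: int
  shows "exp ((of_int (n1+n2+n3+j))^2 * L + of_int (n1+n2+n3+j) * M) *
         exp (of_int ((n1-n3)^2 + (n1-n3)*(n2-n1) + (n2-n1)^2) * (2*L))
       = exp ((of_int j)^2 * L + of_int j * M) * (aJ L M j n1 * aJ L M j n2 * aJ L M j n3)"
proof -
  have "(of_int (n1+n2+n3+j))^2 * L + of_int (n1+n2+n3+j) * M +
         of_int ((n1-n3)^2 + (n1-n3)*(n2-n1) + (n2-n1)^2) * (2*L)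
      = (of_int j)^2 * L + of_int j * M + ((of_int n1)^2 * (3*L) + of_int n1 * (M + 2 * of_int j * L)
          + ((of_int n2)^2 * (3*L) + of_int n2 * (M + 2 * of_int j * L))
          + ((of_int n3)^2 * (3*L) + of_int n3 * (M + 2 * of_int j * L)))"
    by (simp add: algebra_simps power2_eq_square)
  then show ?thesis
    unfolding aJ_def by (simp only: exp_add[symmetric])
qed

lemma A_reindex:
  fixes L M :: complex and w :: "int \<Rightarrow> complex"
  assumes L: "Re L < 0" and w: "\<And>N. norm (w N) \<le> 1 + of_int \<bar>N\<bar>"
  shows "((\<lambda>(j,n1,n2,n3). w (n1+n2+n3+j) * (exp ((of_int j)^2 * L + of_int j * M) * (aJ L M j n1 * aJ L M j n2 * aJ L M j n3)))
           has_sum (infsum (\<lambda>N. w N * exp ((of_int N)^2 * L + of_int N * M)) UNIV * LamE L)) ({0,1,2} \<times> UNIV)"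
proof -
  let ?f = "\<lambda>N. w N * exp ((of_int N)^2 * L + of_int N * M)"
  let ?g = "\<lambda>p. case p of (k,l) \<Rightarrow> exp (of_int (k^2 + k*l + l^2) * (2*L))"
  have H: "((\<lambda>(N,kl). ?f N * ?g kl) has_sum (infsum ?f UNIV * infsum ?g UNIV)) (UNIV \<times> UNIV)"
    by (rule has_sum_times[OF thE_summable[OF L w] Lam_summable[OF L]])
  have Lam: "infsum ?g UNIV = LamE L" unfolding LamE_def by simp
  show ?thesis
  proof (rule iffD2[OF has_sum_reindex_bij_witness[where i=Phi and j=Psi and T=UNIV]])
    show "((\<lambda>(N,kl). ?f N * ?g kl) has_sum (infsum ?f UNIV * LamE L)) UNIV"
      using H Lam by simp
  next
    fix a :: "int \<times> int \<times> int \<times> int" assume "a \<in> {0,1,2} \<times> UNIV"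
    then obtain j n1 n2 n3 where a: "a = (j,n1,n2,n3)" and j: "j \<in> {0,1,2}" by auto
    show "Phi (Psi a) = a" using Phi_Psi[OF j] a by simp
    show "Psi a \<in> UNIV" by simp
    show "(\<lambda>(N,kl). ?f N * ?g kl) (Psi a) = (\<lambda>(j,n1,n2,n3). w (n1+n2+n3+j) * (exp ((of_int j)^2 * L + of_int j * M) * (aJ L M j n1 * aJ L M j n2 * aJ L M j n3))) a"
      using exponent_identity[of n1 n2 n3 j L M] unfolding a Psi_def by (simp add: mult.assoc)
  next
    fix b :: "int \<times> int \<times> int"
    obtain N k l where b: "b = (N,k,l)" by (cases b) auto
    show "Psi (Phi b) = b" using Psi_Phi b by simp
    show "Phi b \<in> {0,1,2} \<times> UNIV" using Phi_in[of b] by (cases "Phi b") auto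
  qed simp
qed


lemma Sigma3_has_sum:
  fixes f :: "int \<times> 'b \<Rightarrow> complex"
  assumes H: "(f has_sum S) ({0,1,2} \<times> UNIV)"
    and F: "\<And>j. j \<in> {0,1,2} \<Longrightarrow> ((\<lambda>n. f (j,n)) has_sum b j) UNIV"
  shows "S = b 0 + b 1 + b 2"
proof -
  have "(b has_sum S) {0,1,2}"
    using has_sum_Sigma'[where f=f and a=S and A="{0,1,2}" and B="\<lambda>_. UNIV" and b=b] H F by simp
  moreover have "(b has_sum (b 0 + b 1 + b 2)) {0,1,2}"
    by (rule has_sum_finiteI) (simp_all add: add.assoc)
  ultimately show ?thesis using has_sum_unique by blast
qed

lemma cube_has_sum:
  fixes L K c :: complex
  assumes L: "Re L < 0"
  shows "((\<lambda>(n1,n2,n3). c * (exp ((of_int n1)^2 * (3*L) + of_int n1 * K) * exp ((of_int n2)^2 * (3*L) + of_int n2 * K) * exp ((of_int n3)^2 * (3*L) + of_int n3 * K)))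
          has_sum (c * thE (3*L) K ^ 3)) UNIV"
proof -
  have L3: "Re (3*L) < 0" using L by simp
  have "((\<lambda>(n1,n2,n3). exp ((of_int n1)^2 * (3*L) + of_int n1 * K) * exp ((of_int n2)^2 * (3*L) + of_int n2 * K) * exp ((of_int n3)^2 * (3*L) + of_int n3 * K))
          has_sum (thE (3*L) K * thE (3*L) K * thE (3*L) K)) UNIV"
    unfolding thE_def by (rule has_sum_times3) (use thE_summable1[OF L3] in auto)
  from has_sum_cmult_right[OF this, of c] show ?thesis
    by (simp add: case_prod_unfold power3_eq_cube)
qed

lemma cube_w_has_sum:
  fixes L K c :: complex and j :: int
  assumes L: "Re L < 0"
  shows "((\<lambda>(n1,n2,n3). of_int (n1+n2+n3+j) * (c * (exp ((of_int n1)^2 * (3*L) + of_int n1 * K) * exp ((of_int n2)^2 * (3*L) + of_int n2 * K) * exp ((of_int n3)^2 * (3*L) + of_int n3 * K))))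
          has_sum (c * (of_int j * thE (3*L) K ^ 3 + 3 * thdE (3*L) K * thE (3*L) K ^ 2))) UNIV"
proof -
  have L3: "Re (3*L) < 0" using L by simp
  define e where "e n = exp ((of_int n)^2 * (3*L) + of_int n * K)" for n :: int
  define d where "d n = of_int n * e n" for n :: int
  have se: "(\<lambda>n. norm (e n)) summable_on UNIV" unfolding e_def by (rule thE_summable1[OF L3])
  have sd: "(\<lambda>n. norm (d n)) summable_on UNIV" unfolding d_def e_def by (rule thdE_summable1[OF L3])
  have ie: "infsum e UNIV = thE (3*L) K" unfolding e_def thE_def by simp
  have id: "infsum d UNIV = thdE (3*L) K" unfolding d_def e_def thdE_def by simp
  have h0: "((\<lambda>(n1,n2,n3). e n1 * e n2 * e n3) has_sum (thE (3*L) K * thE (3*L) K * thE (3*L) K)) UNIV"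
    using has_sum_times3[OF se se se] ie by simp
  have h1: "((\<lambda>(n1,n2,n3). d n1 * e n2 * e n3) has_sum (thdE (3*L) K * thE (3*L) K * thE (3*L) K)) UNIV"
    using has_sum_times3[OF sd se se] ie id by simp
  have h2: "((\<lambda>(n1,n2,n3). e n1 * d n2 * e n3) has_sum (thE (3*L) K * thdE (3*L) K * thE (3*L) K)) UNIV"
    using has_sum_times3[OF se sd se] ie id by simp
  have h3: "((\<lambda>(n1,n2,n3). e n1 * e n2 * d n3) has_sum (thE (3*L) K * thE (3*L) K * thdE (3*L) K)) UNIV"
    using has_sum_times3[OF se se sd] ie id by simp
  have hs: "((\<lambda>p. c * (of_int j * (case p of (n1,n2,n3) \<Rightarrow> e n1 * e n2 * e n3) + (case p of (n1,n2,n3) \<Rightarrow> d n1 * e n2 * e n3)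
            + (case p of (n1,n2,n3) \<Rightarrow> e n1 * d n2 * e n3) + (case p of (n1,n2,n3) \<Rightarrow> e n1 * e n2 * d n3)))
        has_sum (c * (of_int j * (thE (3*L) K * thE (3*L) K * thE (3*L) K) + thdE (3*L) K * thE (3*L) K * thE (3*L) K
            + thE (3*L) K * thdE (3*L) K * thE (3*L) K + thE (3*L) K * thE (3*L) K * thdE (3*L) K))) UNIV"
    by (intro has_sum_cmult_right has_sum_add h1 h2 h3 has_sum_cmult_right[OF h0])
  have v: "c * (of_int j * (thE (3*L) K * thE (3*L) K * thE (3*L) K) + thdE (3*L) K * thE (3*L) K * thE (3*L) K
            + thE (3*L) K * thdE (3*L) K * thE (3*L) K + thE (3*L) K * thE (3*L) K * thdE (3*L) K)
          = c * (of_int j * thE (3*L) K ^ 3 + 3 * thdE (3*L) K * thE (3*L) K ^ 2)"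
    by (simp add: algebra_simps power2_eq_square power3_eq_cube)
  have hs': "((\<lambda>p. c * (of_int j * (case p of (n1,n2,n3) \<Rightarrow> e n1 * e n2 * e n3) + (case p of (n1,n2,n3) \<Rightarrow> d n1 * e n2 * e n3)
            + (case p of (n1,n2,n3) \<Rightarrow> e n1 * d n2 * e n3) + (case p of (n1,n2,n3) \<Rightarrow> e n1 * e n2 * d n3)))
        has_sum (c * (of_int j * thE (3*L) K ^ 3 + 3 * thdE (3*L) K * thE (3*L) K ^ 2))) UNIV"
    using hs unfolding v .
  show ?thesis
    by (rule has_sum_cong[THEN iffD1, OF _ hs']) (auto simp: d_def e_def algebra_simps)
qed


lemma fiber_eq:
  "(\<lambda>n. (\<lambda>(j,n1,n2,n3). w (n1+n2+n3+j) * (exp ((of_int j)^2 * L + of_int j * M) * (aJ L M j n1 * aJ L M j n2 * aJ L M j n3))) (j,n))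
   = (\<lambda>(n1,n2,n3). w (n1+n2+n3+j) * (exp ((of_int j)^2 * L + of_int j * M) * (exp ((of_int n1)^2 * (3*L) + of_int n1 * (M + 2 * of_int j * L)) * exp ((of_int n2)^2 * (3*L) + of_int n2 * (M + 2 * of_int j * L)) * exp ((of_int n3)^2 * (3*L) + of_int n3 * (M + 2 * of_int j * L)))))"
  by (auto simp: aJ_def fun_eq_iff)

theorem A_plain:
  fixes L M :: complex
  assumes L: "Re L < 0"
  shows "thE (3*L) M ^ 3 + exp (L+M) * thE (3*L) (M+2*L) ^ 3 + exp (4*L+2*M) * thE (3*L) (M+4*L) ^ 3
         = thE L M * LamE L"
proof -
  have H: "((\<lambda>(j,n1,n2,n3). (\<lambda>_. 1) (n1+n2+n3+j) * (exp ((of_int j)^2 * L + of_int j * M) * (aJ L M j n1 * aJ L M j n2 * aJ L M j n3)))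
           has_sum (infsum (\<lambda>N. (\<lambda>_. 1) N * exp ((of_int N)^2 * L + of_int N * M)) UNIV * LamE L)) ({0,1,2} \<times> UNIV)"
    by (rule A_reindex[OF L]) simp
  define b where "b j = exp ((of_int j)^2 * L + of_int j * M) * thE (3*L) (M + 2 * of_int j * L) ^ 3" for j :: int
  have "infsum (\<lambda>N. (\<lambda>_. 1) N * exp ((of_int N)^2 * L + of_int N * M)) UNIV * LamE L = b 0 + b 1 + b 2"
  proof (rule Sigma3_has_sum[OF H])
    fix j :: int
    show "((\<lambda>n. (\<lambda>(j,n1,n2,n3). (\<lambda>_. 1) (n1+n2+n3+j) * (exp ((of_int j)^2 * L + of_int j * M) * (aJ L M j n1 * aJ L M j n2 * aJ L M j n3))) (j,n)) has_sum b j) UNIV"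
      using cube_has_sum[OF L, where c="exp ((of_int j)^2 * L + of_int j * M)" and K="M + 2 * of_int j * L"]
      by (simp add: aJ_def b_def case_prod_unfold)
  qed
  moreover have "infsum (\<lambda>N. (\<lambda>_. 1) N * exp ((of_int N)^2 * L + of_int N * M)) UNIV = thE L M"
    unfolding thE_def by simp
  moreover have "b 0 = thE (3*L) M ^ 3" "b 1 = exp (L+M) * thE (3*L) (M+2*L) ^ 3"
    "b 2 = exp (4*L+2*M) * thE (3*L) (M+4*L) ^ 3"
    unfolding b_def by (simp_all add: algebra_simps)
  ultimately show ?thesis by simp
qed

theorem A_weighted:
  fixes L M :: complex
  assumes L: "Re L < 0"
  shows "3 * thdE (3*L) M * thE (3*L) M ^ 2
         + exp (L+M) * (thE (3*L) (M+2*L) ^ 3 + 3 * thdE (3*L) (M+2*L) * thE (3*L) (M+2*L) ^ 2)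
         + exp (4*L+2*M) * (2 * thE (3*L) (M+4*L) ^ 3 + 3 * thdE (3*L) (M+4*L) * thE (3*L) (M+4*L) ^ 2)
         = thdE L M * LamE L"
proof -
  have H: "((\<lambda>(j,n1,n2,n3). (\<lambda>N. of_int N) (n1+n2+n3+j) * (exp ((of_int j)^2 * L + of_int j * M) * (aJ L M j n1 * aJ L M j n2 * aJ L M j n3)))
           has_sum (infsum (\<lambda>N. (\<lambda>N. of_int N) N * exp ((of_int N)^2 * L + of_int N * M)) UNIV * LamE L)) ({0,1,2} \<times> UNIV)"
    by (rule A_reindex[OF L]) simp
  define b where "b j = exp ((of_int j)^2 * L + of_int j * M) * (of_int j * thE (3*L) (M + 2 * of_int j * L) ^ 3
      + 3 * thdE (3*L) (M + 2 * of_int j * L) * thE (3*L) (M + 2 * of_int j * L) ^ 2)" for j :: int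
  have "infsum (\<lambda>N. (\<lambda>N. of_int N) N * exp ((of_int N)^2 * L + of_int N * M)) UNIV * LamE L = b 0 + b 1 + b 2"
  proof (rule Sigma3_has_sum[OF H])
    fix j :: int
    show "((\<lambda>n. (\<lambda>(j,n1,n2,n3). (\<lambda>N. of_int N) (n1+n2+n3+j) * (exp ((of_int j)^2 * L + of_int j * M) * (aJ L M j n1 * aJ L M j n2 * aJ L M j n3))) (j,n)) has_sum b j) UNIV"
      using cube_w_has_sum[OF L, where c="exp ((of_int j)^2 * L + of_int j * M)" and K="M + 2 * of_int j * L" and j=j]
      by (simp add: aJ_def b_def case_prod_unfold)
  qed
  moreover have "infsum (\<lambda>N. (\<lambda>N. of_int N) N * exp ((of_int N)^2 * L + of_int N * M)) UNIV = thdE L M"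
    unfolding thdE_def by simp
  moreover have "b 0 = 3 * thdE (3*L) M * thE (3*L) M ^ 2"
    "b 1 = exp (L+M) * (thE (3*L) (M+2*L) ^ 3 + 3 * thdE (3*L) (M+2*L) * thE (3*L) (M+2*L) ^ 2)"
    "b 2 = exp (4*L+2*M) * (2 * thE (3*L) (M+4*L) ^ 3 + 3 * thdE (3*L) (M+4*L) * thE (3*L) (M+4*L) ^ 2)"
    unfolding b_def by (simp_all add: algebra_simps)
  ultimately show ?thesis by simp
qed


lemma exp_shift_int: "exp (z + of_int n * (2 * of_real pi * \<i>)) = exp z"
  using exp_plus_2pin[of z n] by (simp add: algebra_simps)

lemma exp_pi_int: "exp (of_int n * (of_real pi * \<i>)) = (-1) powi n"
proof -
  have "exp (of_int n * (of_real pi * \<i>)) = exp (of_real pi * \<i>) powi n"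
    by (rule exp_power_int[symmetric])
  also have "exp (of_real pi * \<i>) = -1" by (simp add: exp_eq_polar)
  finally show ?thesis .
qed

lemma bij_shift: "bij_betw (\<lambda>m::int. m + c) UNIV UNIV"
  by (rule bij_betwI[where g="\<lambda>m. m - c"]) auto

lemma bij_neg: "bij_betw (\<lambda>m::int. - m) UNIV UNIV"
  by (rule bij_betwI[where g="\<lambda>m. - m"]) auto

lemma thE_shift: "thE K (M + 2*K) = exp (-K-M) * thE K M"
proof -
  have "thE K (M + 2*K) = (\<Sum>\<^sub>\<infinity>m::int. exp ((of_int (m + (-1)))^2 * K + of_int (m + (-1)) * (M + 2*K)))"
    unfolding thE_def by (rule infsum_reindex_bij_betw[OF bij_shift, symmetric])
  also have "\<dots> = (\<Sum>\<^sub>\<infinity>m::int. exp (-K-M) * exp ((of_int m)^2 * K + of_int m * M))"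
  proof (rule infsum_cong)
    fix m :: int
    have "(of_int (m + (-1)))^2 * K + of_int (m + (-1)) * (M + 2*K) = (-K-M) + ((of_int m)^2 * K + of_int m * M)"
      by (simp add: algebra_simps power2_eq_square)
    then show "exp ((of_int (m + (-1)))^2 * K + of_int (m + (-1)) * (M + 2*K)) = exp (-K-M) * exp ((of_int m)^2 * K + of_int m * M)"
      by (simp add: exp_add[symmetric])
  qed
  also have "\<dots> = exp (-K-M) * thE K M" unfolding thE_def by (rule infsum_cmult_right')
  finally show ?thesis .
qed

lemma thdE_shift:
  assumes K: "Re K < 0"
  shows "thdE K (M + 2*K) = exp (-K-M) * (thdE K M - thE K M)"
proof -
  have "thdE K (M + 2*K) = (\<Sum>\<^sub>\<infinity>m::int. of_int (m + (-1)) * exp ((of_int (m + (-1)))^2 * K + of_int (m + (-1)) * (M + 2*K)))"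
    unfolding thdE_def by (rule infsum_reindex_bij_betw[OF bij_shift, symmetric])
  also have "\<dots> = (\<Sum>\<^sub>\<infinity>m::int. exp (-K-M) * (of_int m * exp ((of_int m)^2 * K + of_int m * M) - exp ((of_int m)^2 * K + of_int m * M)))"
  proof (rule infsum_cong)
    fix m :: int
    have "(of_int (m + (-1)))^2 * K + of_int (m + (-1)) * (M + 2*K) = (-K-M) + ((of_int m)^2 * K + of_int m * M)"
      by (simp add: algebra_simps power2_eq_square)
    then show "of_int (m + (-1)) * exp ((of_int (m + (-1)))^2 * K + of_int (m + (-1)) * (M + 2*K)) = exp (-K-M) * (of_int m * exp ((of_int m)^2 * K + of_int m * M) - exp ((of_int m)^2 * K + of_int m * M))"
      by (simp add: exp_add[symmetric] algebra_simps)
  qed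
  also have "\<dots> = exp (-K-M) * (\<Sum>\<^sub>\<infinity>m::int. of_int m * exp ((of_int m)^2 * K + of_int m * M) - exp ((of_int m)^2 * K + of_int m * M))"
    by (rule infsum_cmult_right')
  also have "(\<Sum>\<^sub>\<infinity>m::int. of_int m * exp ((of_int m)^2 * K + of_int m * M) - exp ((of_int m)^2 * K + of_int m * M)) = thdE K M - thE K M"
  proof -
    have s1: "(\<lambda>m. of_int m * exp ((of_int m)^2 * K + of_int m * M)) summable_on UNIV"
      by (rule abs_summable_summable[OF thdE_summable1[OF K]])
    have s2: "(\<lambda>m. - exp ((of_int m)^2 * K + of_int m * M)) summable_on UNIV"
      by (simp only: summable_on_uminus) (rule abs_summable_summable[OF thE_summable1[OF K]])
    show ?thesis
      unfolding thdE_def thE_def using infsum_add[OF s1 s2] infsum_uminus by simp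
  qed
  finally show ?thesis .
qed

lemma thE_neg: "thE K (- M) = thE K M"
proof -
  have "thE K (- M) = (\<Sum>\<^sub>\<infinity>m::int. exp ((of_int (- m))^2 * K + of_int (- m) * (- M)))"
    unfolding thE_def by (rule infsum_reindex_bij_betw[OF bij_neg, symmetric])
  also have "\<dots> = thE K M" unfolding thE_def by simp
  finally show ?thesis .
qed

lemma thdE_neg: "thdE K (- M) = - thdE K M"
proof -
  have "thdE K (- M) = (\<Sum>\<^sub>\<infinity>m::int. of_int (- m) * exp ((of_int (- m))^2 * K + of_int (- m) * (- M)))"
    unfolding thdE_def by (rule infsum_reindex_bij_betw[OF bij_neg, symmetric])
  also have "\<dots> = (\<Sum>\<^sub>\<infinity>m::int. - (of_int m * exp ((of_int m)^2 * K + of_int m * M)))" by simp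
  also have "\<dots> = - thdE K M" unfolding thdE_def by (rule infsum_uminus)
  finally show ?thesis .
qed

lemma thE_per: "thE K (M + 2 * of_real pi * \<i>) = thE K M"
  unfolding thE_def
proof (rule infsum_cong)
  fix n :: int
  have "(of_int n)^2 * K + of_int n * (M + 2 * of_real pi * \<i>) = ((of_int n)^2 * K + of_int n * M) + of_int n * (2 * of_real pi * \<i>)"
    by (simp add: algebra_simps)
  then show "exp ((of_int n)^2 * K + of_int n * (M + 2 * of_real pi * \<i>)) = exp ((of_int n)^2 * K + of_int n * M)"
    by (simp only: exp_shift_int)
qed

lemma thdE_per: "thdE K (M + 2 * of_real pi * \<i>) = thdE K M"
  unfolding thdE_def
proof (rule infsum_cong)
  fix n :: int
  have "(of_int n)^2 * K + of_int n * (M + 2 * of_real pi * \<i>) = ((of_int n)^2 * K + of_int n * M) + of_int n * (2 * of_real pi * \<i>)"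
    by (simp add: algebra_simps)
  then show "of_int n * exp ((of_int n)^2 * K + of_int n * (M + 2 * of_real pi * \<i>)) = of_int n * exp ((of_int n)^2 * K + of_int n * M)"
    by (simp only: exp_shift_int)
qed


lemma B_eval:
  fixes L :: complex
  assumes L: "Re L < 0"
  defines "pii \<equiv> of_real pi * \<i>"
  shows "thE (3*L) (L + pii) ^ 2 * (thE (3*L) (L + pii) + 6 * thdE (3*L) (L + pii)) = thdE L (L + pii) * LamE L"
proof -
  define K where "K = 3*L"
  have K: "Re K < 0" using L by (simp add: K_def)
  define T0 where "T0 = thE K (L + pii)"
  define D0 where "D0 = thdE K (L + pii)"
  have per: "2 * of_real pi * \<i> = 2 * pii" by (simp add: pii_def)
  have epi: "exp pii = -1" by (simp add: pii_def)
  have perT: "thE K' (M + 2*pii) = thE K' M" for K' M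
  proof -
    have "M + 2*pii = M + 2 * of_real pi * \<i>" by (simp add: pii_def)
    then show ?thesis by (simp only: thE_per)
  qed
  have perD: "thdE K' (M + 2*pii) = thdE K' M" for K' M
  proof -
    have "M + 2*pii = M + 2 * of_real pi * \<i>" by (simp add: pii_def)
    then show ?thesis by (simp only: thdE_per)
  qed
  have eqm: "M - pii + 2*pii = M + pii" for M :: complex by (simp add: algebra_simps)
  have emp: "exp (- pii) = -1" by (simp add: pii_def exp_minus)
  have T1: "thE K (K + pii) = 0"
  proof -
    have a: "thE K (K - pii) = thE K (K + pii)"
      by (metis eqm perT)
    have "thE K (K - pii) = thE K ((-K-pii) + 2*K)" by (simp add: algebra_simps)
    also have "\<dots> = exp (-K - (-K-pii)) * thE K (-K-pii)" by (rule thE_shift)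
    also have "\<dots> = - thE K (K + pii)"
      using thE_neg[of K "K + pii"] epi by simp
    finally show ?thesis using a by simp
  qed
  have negT: "thE K (-L + pii) = T0"
  proof -
    have "thE K (-L + pii) = thE K (L - pii)" using thE_neg[of K "L - pii"] by simp
    also have "\<dots> = thE K (L + pii)" by (metis eqm perT)
    finally show ?thesis by (simp add: T0_def)
  qed
  have negD: "thdE K (-L + pii) = - D0"
  proof -
    have "thdE K (-L + pii) = - thdE K (L - pii)" using thdE_neg[of K "L - pii"] by simp
    also have "thdE K (L - pii) = thdE K (L + pii)" by (metis eqm perD)
    finally show ?thesis by (simp add: D0_def)
  qed
  have e2: "exp (-K - (-L + pii)) = - exp (-2*L)"
    by (simp add: K_def exp_diff exp_minus epi field_simps exp_add[symmetric])
  have T2: "thE K (L + pii + 4*L) = - exp (-2*L) * T0"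
  proof -
    have "thE K (L + pii + 4*L) = thE K ((-L + pii) + 2*K)" by (simp add: K_def algebra_simps)
    also have "\<dots> = exp (-K - (-L + pii)) * thE K (-L + pii)" by (rule thE_shift)
    finally show ?thesis using e2 negT by simp
  qed
  have D2: "thdE K (L + pii + 4*L) = exp (-2*L) * (D0 + T0)"
  proof -
    have "thdE K (L + pii + 4*L) = thdE K ((-L + pii) + 2*K)" by (simp add: K_def algebra_simps)
    also have "\<dots> = exp (-K - (-L + pii)) * (thdE K (-L + pii) - thE K (-L + pii))" by (rule thdE_shift[OF K])
    finally show ?thesis using e2 negT negD by (simp add: algebra_simps)
  qed
  have T1': "thE K (L + pii + 2*L) = 0" using T1 by (simp add: K_def algebra_simps)
  have ex1: "exp (L + (L + pii)) = - exp (2*L)"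
  proof -
    have "L + (L + pii) = pii + 2*L" by (simp add: algebra_simps)
    then show ?thesis by (simp only: exp_add epi) simp
  qed
  have ex2: "exp (4*L + 2*(L + pii)) = exp (6*L)"
  proof -
    have "4*L + 2*(L + pii) = 6*L + of_int 1 * (2 * of_real pi * \<i>)" by (simp add: pii_def algebra_simps)
    then show ?thesis by (simp only: exp_shift_int)
  qed
  have c3: "exp (6*L) * exp (-2*L)^3 = 1"
  proof -
    have "exp (-2*L)^3 = exp (of_nat 3 * (-2*L))" by (rule exp_of_nat_mult[symmetric])
    then show ?thesis by (simp add: exp_add[symmetric])
  qed
  have W: "3 * D0 * T0 ^ 2
         + exp (L+(L + pii)) * (thE K ((L + pii)+2*L) ^ 3 + 3 * thdE K ((L + pii)+2*L) * thE K ((L + pii)+2*L) ^ 2)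
         + exp (4*L+2*(L + pii)) * (2 * thE K ((L + pii)+4*L) ^ 3 + 3 * thdE K ((L + pii)+4*L) * thE K ((L + pii)+4*L) ^ 2)
         = thdE L (L + pii) * LamE L"
    using A_weighted[OF L, of "L + pii"] by (simp add: K_def T0_def D0_def)
  have "3 * D0 * T0 ^ 2
         + exp (L+(L + pii)) * (thE K ((L + pii)+2*L) ^ 3 + 3 * thdE K ((L + pii)+2*L) * thE K ((L + pii)+2*L) ^ 2)
         + exp (4*L+2*(L + pii)) * (2 * thE K ((L + pii)+4*L) ^ 3 + 3 * thdE K ((L + pii)+4*L) * thE K ((L + pii)+4*L) ^ 2)
      = 3 * D0 * T0 ^ 2 + exp (6*L) * (2 * (- exp (-2*L) * T0) ^ 3 + 3 * (exp (-2*L) * (D0 + T0)) * (- exp (-2*L) * T0) ^ 2)"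
    unfolding T1' T2 D2 ex2 by (simp add: add_ac)
  also have "\<dots> = 3 * D0 * T0 ^ 2 + (exp (6*L) * exp (-2*L)^3) * (- 2 * T0^3 + 3 * (D0 + T0) * T0^2)"
    by (simp add: algebra_simps power2_eq_square power3_eq_cube)
  also have "\<dots> = T0 ^ 2 * (T0 + 6 * D0)"
    unfolding c3 by (simp add: algebra_simps power2_eq_square power3_eq_cube)
  finally show ?thesis using W by (simp add: K_def T0_def D0_def)
qed


lemma tannery_int:
  fixes a :: "int \<Rightarrow> complex" and G :: "nat \<Rightarrow> int \<Rightarrow> complex"
  assumes a: "(\<lambda>j. norm (a j)) summable_on UNIV"
    and bnd: "\<And>N j. norm (G N j) \<le> C"
    and lim: "\<And>j. (\<lambda>N. G N j) \<longlonglongrightarrow> g"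
  shows "(\<lambda>N. \<Sum>j\<in>{- int N..int N}. G N j * a j) \<longlonglongrightarrow> g * infsum a UNIV"
proof -
  define s where "s N j = (if j \<in> {- int N..int N} then G N j * a j else 0)" for N j
  define w where "w j = C * norm (a j)" for j
  have aa: "Infinite_Set_Sum.abs_summable_on a UNIV"
    using abs_summable_equivalent a by blast
  have intw: "integrable (count_space UNIV) w"
  proof -
    have "Infinite_Set_Sum.abs_summable_on (\<lambda>j. C * norm (a j)) UNIV"
      using aa by (intro abs_summable_on_cmult_right) simp
    then show ?thesis unfolding w_def Infinite_Set_Sum.abs_summable_on_def by simp
  qed
  have L1: "(\<lambda>N. integral\<^sup>L (count_space UNIV) (s N)) \<longlonglongrightarrow> integral\<^sup>L (count_space UNIV) (\<lambda>j. g * a j)"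
  proof (rule integral_dominated_convergence[where w=w])
    show "AE j in count_space UNIV. (\<lambda>N. s N j) \<longlonglongrightarrow> g * a j"
    proof (rule AE_I2)
      fix j :: int
      have ev: "eventually (\<lambda>N. s N j = G N j * a j) sequentially"
      proof -
        have "eventually (\<lambda>N. nat \<bar>j\<bar> \<le> N) sequentially" by (rule eventually_ge_at_top)
        then show ?thesis by eventually_elim (auto simp: s_def)
      qed
      have "(\<lambda>N. G N j * a j) \<longlonglongrightarrow> g * a j" by (intro tendsto_intros lim)
      then show "(\<lambda>N. s N j) \<longlonglongrightarrow> g * a j"
        using tendsto_cong[OF ev] by blast
    qed
    show "AE j in count_space UNIV. norm (s N j) \<le> w j" for N
    proof (rule AE_I2)
      fix j
      show "norm (s N j) \<le> w j"
        using bnd[of N j] order_trans[OF norm_ge_zero bnd[of N j]] by (auto simp: s_def w_def norm_mult intro: mult_right_mono)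
    qed
  qed (use intw in auto)
  have E1: "integral\<^sup>L (count_space UNIV) (s N) = (\<Sum>j\<in>{- int N..int N}. G N j * a j)" for N
  proof -
    have "integral\<^sup>L (count_space UNIV) (s N) = infsetsum (s N) UNIV" by (simp add: infsetsum_def)
    also have "\<dots> = infsetsum (s N) {- int N..int N}"
      by (rule infsetsum_cong_neutral) (auto simp: s_def)
    also have "\<dots> = (\<Sum>j\<in>{- int N..int N}. G N j * a j)" by (simp add: s_def)
    finally show ?thesis .
  qed
  have E2: "integral\<^sup>L (count_space UNIV) (\<lambda>j. g * a j) = g * infsum a UNIV"
  proof -
    have "integral\<^sup>L (count_space UNIV) (\<lambda>j. g * a j) = infsetsum (\<lambda>j. g * a j) UNIV" by (simp add: infsetsum_def)
    also have "\<dots> = g * infsetsum a UNIV" by (rule infsetsum_cmult_right) (rule aa)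
    also have "infsetsum a UNIV = infsum a UNIV" by (rule infsetsum_infsum[OF aa])
    finally show ?thesis .
  qed
  show ?thesis using L1 unfolding E1 E2 .
qed


definition Epr :: "complex \<Rightarrow> nat \<Rightarrow> complex" where
  "Epr p m = (\<Prod>k=1..m. (1 - p^k))"

definition Ei :: "complex \<Rightarrow> int \<Rightarrow> complex" where
  "Ei p m = (if m < 0 then 0 else 1 / Epr p (nat m))"

definition Wc :: "complex \<Rightarrow> nat \<Rightarrow> int \<Rightarrow> complex" where
  "Wc x N j = x powi (j^2) * Epr (x^2) (2*N) * Ei (x^2) (int N + j) * Ei (x^2) (int N - j)"

lemma Epr_0 [simp]: "Epr p 0 = 1" by (simp add: Epr_def)

lemma Epr_Suc: "Epr p (Suc m) = Epr p m * (1 - p^(Suc m))"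
  by (simp add: Epr_def)

lemma Epr_nonzero: assumes "norm p < 1" shows "Epr p m \<noteq> 0"
proof -
  have "1 - p^k \<noteq> 0" if "k \<ge> 1" for k :: nat
  proof
    assume "1 - p^k = 0"
    then have "p^k = 1" by simp
    then have "norm (p^k) = 1" by simp
    moreover have "norm (p^k) < 1"
      using that assms by (simp add: norm_power power_less_one_iff)
    ultimately show False by simp
  qed
  then show ?thesis unfolding Epr_def by (simp add: prod_zero_iff)
qed

lemma Ei_neg: "m < 0 \<Longrightarrow> Ei p m = 0" by (simp add: Ei_def)

lemma Ei_0 [simp]: "Ei p 0 = 1" by (simp add: Ei_def)

lemma Ei_shift:
  assumes p: "norm p < 1" and m: "m \<ge> 0"
  shows "Ei p (m - 1) = (1 - p^(nat m)) * Ei p m"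
proof (cases "m = 0")
  case True then show ?thesis by (simp add: Ei_def)
next
  case False
  then obtain k where k: "m = int (Suc k)" using m by (metis int_ops(1) nat_0_le not0_implies_Suc)
  have "Epr p (Suc k) = Epr p k * (1 - p^(Suc k))" by (rule Epr_Suc)
  moreover have "Epr p k \<noteq> 0" "Epr p (Suc k) \<noteq> 0" using Epr_nonzero[OF p] by auto
  ultimately have "1 - p^(Suc k) \<noteq> 0" by auto
  have n1: "nat m = Suc k" "nat (m - 1) = k" using k by auto
  have "Ei p (m - 1) = 1 / Epr p k" using k n1 by (simp add: Ei_def)
  also have "\<dots> = (1 - p^(Suc k)) * (1 / Epr p (Suc k))"
    using \<open>Epr p (Suc k) = Epr p k * (1 - p^(Suc k))\<close> \<open>Epr p k \<noteq> 0\<close> \<open>Epr p (Suc k) \<noteq> 0\<close> \<open>1 - p^(Suc k) \<noteq> 0\<close> by (simp add: field_simps)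
  also have "1 / Epr p (Suc k) = Ei p m" using k n1 by (simp add: Ei_def)
  finally show ?thesis using n1 by simp
qed

lemma Ei_shift2:
  assumes p: "norm p < 1"
  shows "Ei p (int a - 2) = (1 - p^(a - 1)) * (1 - p^a) * Ei p (int a)"
proof (cases "a = 0")
  case True then show ?thesis by (simp add: Ei_def)
next
  case False
  have "Ei p (int a - 1 - 1) = (1 - p^(nat (int a - 1))) * Ei p (int a - 1)"
    by (rule Ei_shift[OF p]) (use False in auto)
  also have "Ei p (int a - 1) = (1 - p^a) * Ei p (int a)"
    using Ei_shift[OF p, of "int a"] by simp
  finally show ?thesis using False by (simp add: nat_diff_distrib' algebra_simps)
qed

lemma poly_ident:
  fixes p :: complex and \<alpha> \<beta> N :: nat
  assumes ab: "\<alpha> + \<beta> = 2*N + 2"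
  shows "(1 - p^(2*N+1)) * (1 - p^(2*N+2)) = (1 + p^(2*N+1)) * (1 - p^\<alpha>) * (1 - p^\<beta>)
          + p^\<beta> * ((1 - p^(\<alpha> - 1)) * (1 - p^\<alpha>)) + p^\<alpha> * ((1 - p^(\<beta> - 1)) * (1 - p^\<beta>))"
proof (cases "\<alpha> = 0")
  case True
  then have "\<beta> = 2*N + 2" using ab by simp
  then show ?thesis using True by simp
next
  case F1: False
  show ?thesis
  proof (cases "\<beta> = 0")
    case True
    then have "\<alpha> = 2*N + 2" using ab by simp
    then show ?thesis using True by simp
  next
    case False
    obtain a where a: "\<alpha> = Suc a" using F1 by (cases \<alpha>) auto
    obtain b where b: "\<beta> = Suc b" using False by (cases \<beta>) auto
    have s: "2*N = a + b" using ab a b by simp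
    define A where "A = p^a"
    define B where "B = p^b"
    have M: "p^(2*N) = A*B" unfolding s A_def B_def by (rule power_add)
    have e1: "p^(2*N+1) = p*(A*B)" using M by simp
    have e2: "p^(2*N+2) = p*p*(A*B)" using M by simp
    have e3: "p^\<alpha> = p*A" "p^\<beta> = p*B" "p^(\<alpha>-1) = A" "p^(\<beta>-1) = B" by (simp_all add: a b A_def B_def)
    have "(1 - p*(A*B)) * (1 - p*p*(A*B)) = (1 + p*(A*B)) * (1 - p*A) * (1 - p*B)
          + p*B * ((1 - A) * (1 - p*A)) + p*A * ((1 - B) * (1 - p*B))"
      by (simp add: algebra_simps)
    then show ?thesis unfolding e1 e2 e3 .
  qed
qed


lemma powi_shift_sq:
  fixes x :: complex and j c :: int assumes x: "x \<noteq> 0" and that: "c = 1 \<or> c = -1" "int N + 1 + c*j \<ge> 0"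
  shows "x powi ((j + c)^2) * x^(2*N+1) = x powi (j^2) * (x^2)^(nat (int N + 1 + c*j) )"
proof -
  have "x powi ((j + c)^2) * x^(2*N+1) = x powi ((j + c)^2) * x powi (int (2*N+1))" by (simp only: power_int_of_nat)
  also have "\<dots> = x powi ((j + c)^2 + int (2*N+1))" by (rule power_int_add[symmetric]) (simp add: x)
  also have "(j + c)^2 + int (2*N+1) = j^2 + 2 * (int N + 1 + c*j)"
    using that(1) by (auto simp: power2_eq_square algebra_simps)
  also have "x powi (j^2 + 2 * (int N + 1 + c*j)) = x powi (j^2) * x powi (2 * (int N + 1 + c*j))"
    using x by (simp add: power_int_add)
  also have "x powi (2 * (int N + 1 + c*j)) = (x^2)^(nat (int N + 1 + c*j))"
  proof -
    have "x powi (2 * (int N + 1 + c*j)) = (x powi 2) powi (int N + 1 + c*j)" by (rule power_int_mult)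
    also have "\<dots> = (x^2) powi int (nat (int N + 1 + c*j))" using that(2) by simp
    also have "\<dots> = (x^2)^(nat (int N + 1 + c*j))" by (rule power_int_of_nat)
    finally show ?thesis .
  qed
  finally show ?thesis .
qed

lemma Wc_rec:
  fixes x :: complex
  assumes x1: "norm x < 1" and x0: "x \<noteq> 0"
  shows "Wc x (Suc N) j = (1 + x^(4*N+2)) * Wc x N j + x^(2*N+1) * (Wc x N (j-1) + Wc x N (j+1))"
proof -
  define p where "p = x^2"
  have p: "norm p < 1" using x1 by (simp add: p_def norm_power power_less_one_iff)
  consider (lo) "int N + 1 + j < 0" | (hi) "int N + 1 - j < 0" | (mid) "int N + 1 + j \<ge> 0" "int N + 1 - j \<ge> 0"
    by linarith
  then show ?thesis
  proof cases
    case lo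
    then show ?thesis unfolding Wc_def by (simp add: Ei_neg add.commute)
  next
    case hi
    then show ?thesis unfolding Wc_def by (simp add: Ei_neg add.commute)
  next
    case mid
    define \<alpha> where "\<alpha> = nat (int N + 1 + j)"
    define \<beta> where "\<beta> = nat (int N + 1 - j)"
    have a: "int \<alpha> = int N + 1 + j" and b: "int \<beta> = int N + 1 - j" using mid by (simp_all add: \<alpha>_def \<beta>_def)
    have ab: "\<alpha> + \<beta> = 2*N + 2" using a b by linarith
    define Z where "Z = Ei p (int \<alpha>) * Ei p (int \<beta>)"
    define E where "E = Epr p (2*N)"
    have "Ei p (int \<alpha> - 1) = (1 - p^\<alpha>) * Ei p (int \<alpha>)"
      using Ei_shift[OF p, of "int \<alpha>"] by simp
    moreover have "int N + j = int \<alpha> - 1" using a by simp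
    ultimately have Ea: "Ei p (int N + j) = (1 - p^\<alpha>) * Ei p (int \<alpha>)" by simp
    have "Ei p (int \<beta> - 1) = (1 - p^\<beta>) * Ei p (int \<beta>)"
      using Ei_shift[OF p, of "int \<beta>"] by simp
    moreover have "int N - j = int \<beta> - 1" using b by simp
    ultimately have Eb: "Ei p (int N - j) = (1 - p^\<beta>) * Ei p (int \<beta>)" by simp
    have ix1: "int N + (j - 1) = int \<alpha> - 2" using a by simp
    then have Ea2: "Ei p (int N + (j - 1)) = (1 - p^(\<alpha> - 1)) * (1 - p^\<alpha>) * Ei p (int \<alpha>)"
      by (subst ix1) (rule Ei_shift2[OF p])
    have ix2: "int N - (j + 1) = int \<beta> - 2" using b by simp
    then have Eb2: "Ei p (int N - (j + 1)) = (1 - p^(\<beta> - 1)) * (1 - p^\<beta>) * Ei p (int \<beta>)"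
      by (subst ix2) (rule Ei_shift2[OF p])
    have ix3: "int N + (j + 1) = int \<alpha>" using a by simp
    then have Ea1: "Ei p (int N + (j + 1)) = Ei p (int \<alpha>)" by (simp only: ix3)
    have ix4: "int N - (j - 1) = int \<beta>" using b by simp
    then have Eb1: "Ei p (int N - (j - 1)) = Ei p (int \<beta>)" by (simp only: ix4)
    have ix5: "int (Suc N) + j = int \<alpha>" using a by simp
    then have Ea0: "Ei p (int (Suc N) + j) = Ei p (int \<alpha>)" by (simp only: ix5)
    have ix6: "int (Suc N) - j = int \<beta>" using b by simp
    then have Eb0: "Ei p (int (Suc N) - j) = Ei p (int \<beta>)" by (simp only: ix6)
    have EE: "Epr p (2 * Suc N) = E * ((1 - p^(2*N+1)) * (1 - p^(2*N+2)))"
      by (simp add: E_def Epr_Suc)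
    have P1: "x powi ((j + (-1))^2) * x^(2*N+1) = x powi (j^2) * p^\<beta>"
      using powi_shift_sq[where x=x and c="-1" and j=j and N=N] x0 mid by (simp add: p_def \<beta>_def)
    have P2: "x powi ((j + 1)^2) * x^(2*N+1) = x powi (j^2) * p^\<alpha>"
      using powi_shift_sq[where x=x and c=1 and j=j and N=N] x0 mid by (simp add: p_def \<alpha>_def)
    have P3: "x^(4*N+2) = p^(2*N+1)"
    proof -
      have "x^(4*N+2) = x^(2*(2*N+1))" by (simp add: algebra_simps)
      then show ?thesis by (simp only: p_def power_mult)
    qed
    have L: "Wc x (Suc N) j = x powi (j^2) * E * Z * ((1 - p^(2*N+1)) * (1 - p^(2*N+2)))"
      unfolding Wc_def p_def[symmetric] Ea0 Eb0 EE Z_def by simp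
    have R1: "Wc x N j = x powi (j^2) * E * Z * ((1 - p^\<alpha>) * (1 - p^\<beta>))"
      unfolding Wc_def p_def[symmetric] Ea Eb Z_def E_def by simp
    have R2: "x^(2*N+1) * Wc x N (j-1) = x powi (j^2) * E * Z * (p^\<beta> * ((1 - p^(\<alpha> - 1)) * (1 - p^\<alpha>)))"
    proof -
      have "x^(2*N+1) * Wc x N (j-1) = (x powi ((j + (-1))^2) * x^(2*N+1)) * E * (Ei p (int N + (j - 1)) * Ei p (int N - (j - 1)))"
        unfolding Wc_def p_def[symmetric] E_def by (simp add: algebra_simps)
      also have "\<dots> = x powi (j^2) * E * Z * (p^\<beta> * ((1 - p^(\<alpha> - 1)) * (1 - p^\<alpha>)))"
        unfolding P1 Ea2 Eb1 Z_def by (simp add: algebra_simps)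
      finally show ?thesis .
    qed
    have R3: "x^(2*N+1) * Wc x N (j+1) = x powi (j^2) * E * Z * (p^\<alpha> * ((1 - p^(\<beta> - 1)) * (1 - p^\<beta>)))"
    proof -
      have "x^(2*N+1) * Wc x N (j+1) = (x powi ((j + 1)^2) * x^(2*N+1)) * E * (Ei p (int N + (j + 1)) * Ei p (int N - (j + 1)))"
        unfolding Wc_def p_def[symmetric] E_def by (simp add: algebra_simps)
      also have "\<dots> = x powi (j^2) * E * Z * (p^\<alpha> * ((1 - p^(\<beta> - 1)) * (1 - p^\<beta>)))"
        unfolding P2 Ea1 Eb2 Z_def by (simp add: algebra_simps)
      finally show ?thesis .
    qed
    have "(1 + x^(4*N+2)) * Wc x N j + x^(2*N+1) * (Wc x N (j-1) + Wc x N (j+1))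
        = x powi (j^2) * E * Z * ((1 + p^(2*N+1)) * (1 - p^\<alpha>) * (1 - p^\<beta>)
          + p^\<beta> * ((1 - p^(\<alpha> - 1)) * (1 - p^\<alpha>)) + p^\<alpha> * ((1 - p^(\<beta> - 1)) * (1 - p^\<beta>)))"
      unfolding distrib_left[of "x^(2*N+1)"] R2 R3 R1 P3 by (simp add: algebra_simps)
    also have "\<dots> = Wc x (Suc N) j"
      unfolding L poly_ident[OF ab, of p] ..
    finally show ?thesis ..
  qed
qed


definition PN :: "complex \<Rightarrow> complex \<Rightarrow> nat \<Rightarrow> complex" where
  "PN x y N = (\<Prod>k=1..N. (1 + x^(2*k-1) * y) * (1 + x^(2*k-1) / y))"

lemma Wc_zero: "\<bar>j\<bar> > int N \<Longrightarrow> Wc x N j = 0"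
  unfolding Wc_def by (cases "j > 0") (auto simp: Ei_neg)

lemma sum_shift_up:
  fixes g :: "int \<Rightarrow> complex"
  assumes R: "R \<ge> 0" and g1: "g (-R) = 0" and g2: "g (R+1) = 0"
  shows "(\<Sum>j=-R..R. g (j+1)) = (\<Sum>j=-R..R. g j)"
proof -
  have "(\<Sum>j=-R..R. g (j+1)) = (\<Sum>j=-R+1..R+1. g j)"
    by (rule sum.reindex_bij_witness[where i="\<lambda>j. j - 1" and j="\<lambda>j. j + 1"]) auto
  also have "{-R+1..R+1} = insert (R+1) {-R+1..R}" using R by auto
  also have "(\<Sum>j\<in>insert (R+1) {-R+1..R}. g j) = (\<Sum>j=-R+1..R. g j)"
    using g2 by (subst sum.insert) auto
  also have "\<dots> = (\<Sum>j\<in>insert (-R) {-R+1..R}. g j)"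
    using g1 by (subst sum.insert) auto
  also have "insert (-R) {-R+1..R} = {-R..R}" using R by auto
  finally show ?thesis .
qed

lemma sum_shift_down:
  fixes g :: "int \<Rightarrow> complex"
  assumes R: "R \<ge> 0" and g1: "g R = 0" and g2: "g (-R-1) = 0"
  shows "(\<Sum>j=-R..R. g (j-1)) = (\<Sum>j=-R..R. g j)"
proof -
  have "(\<Sum>j=-R..R. g (j-1)) = (\<Sum>j=-R-1..R-1. g j)"
    by (rule sum.reindex_bij_witness[where i="\<lambda>j. j + 1" and j="\<lambda>j. j - 1"]) auto
  also have "{-R-1..R-1} = insert (-R-1) {-R..R-1}" using R by auto
  also have "(\<Sum>j\<in>insert (-R-1) {-R..R-1}. g j) = (\<Sum>j=-R..R-1. g j)"
    using g2 by (subst sum.insert) auto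
  also have "\<dots> = (\<Sum>j\<in>insert R {-R..R-1}. g j)"
    using g1 by (subst sum.insert) auto
  also have "insert R {-R..R-1} = {-R..R}" using R by auto
  finally show ?thesis .
qed

theorem JTP_fin:
  fixes x y :: complex
  assumes x1: "norm x < 1" and x0: "x \<noteq> 0" and y0: "y \<noteq> 0"
  shows "int N \<le> R \<Longrightarrow> PN x y N = (\<Sum>j=-R..R. Wc x N j * y powi j)"
proof (induction N arbitrary: R)
  case 0
  have "(\<Sum>j=-R..R. Wc x 0 j * y powi j) = (\<Sum>j=-R..R. if j = 0 then 1 else 0)"
  proof (rule sum.cong)
    fix j assume "j \<in> {-R..R}"
    show "Wc x 0 j * y powi j = (if j = 0 then 1 else 0)"
      using Wc_zero[of 0 j x] by (auto simp: Wc_def)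
  qed simp
  also have "\<dots> = 1" using "0.prems" by simp
  finally show ?case by (simp add: PN_def)
next
  case (Suc N)
  have R0: "R \<ge> 0" and RN: "int N < R" using Suc.prems by auto
  define B where "B = x^(2*N+1)"
  define S where "S = (\<Sum>j=-R..R. Wc x N j * y powi j)"
  have IH: "PN x y N = S" unfolding S_def by (rule Suc.IH) (use RN in auto)
  have step: "PN x y (Suc N) = PN x y N * ((1 + B^2) + B * y + B / y)"
  proof -
    have "PN x y (Suc N) = PN x y N * ((1 + B * y) * (1 + B / y))"
      by (simp add: PN_def B_def)
    also have "(1 + B * y) * (1 + B / y) = (1 + B^2) + B * y + B / y"
      using y0 by (simp add: field_simps power2_eq_square)
    finally show ?thesis .
  qed
  have B2: "x^(4*N+2) = B^2"
  proof -
    have "x^(4*N+2) = x^((2*N+1)*2)" by (simp add: algebra_simps)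
    then show ?thesis by (simp only: B_def power_mult)
  qed
  have s1: "(\<Sum>j=-R..R. Wc x N (j-1) * y powi j) = y * S"
  proof -
    have "(\<Sum>j=-R..R. Wc x N (j-1) * y powi j) = (\<Sum>j=-R..R. (\<lambda>j. Wc x N j * y powi (j+1)) (j-1))" by simp
    also have "\<dots> = (\<Sum>j=-R..R. Wc x N j * y powi (j+1))"
      by (rule sum_shift_down[OF R0]) (use RN in \<open>simp_all add: Wc_zero\<close>)
    also have "\<dots> = (\<Sum>j=-R..R. y * (Wc x N j * y powi j))"
      using y0 by (intro sum.cong) (simp_all add: power_int_add)
    also have "\<dots> = y * S" unfolding S_def by (rule sum_distrib_left[symmetric])
    finally show ?thesis .
  qed
  have s2: "(\<Sum>j=-R..R. Wc x N (j+1) * y powi j) = S / y"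
  proof -
    have "(\<Sum>j=-R..R. Wc x N (j+1) * y powi j) = (\<Sum>j=-R..R. (\<lambda>j. Wc x N j * y powi (j-1)) (j+1))" by simp
    also have "\<dots> = (\<Sum>j=-R..R. Wc x N j * y powi (j-1))"
      by (rule sum_shift_up[OF R0]) (use RN in \<open>simp_all add: Wc_zero\<close>)
    also have "\<dots> = (\<Sum>j=-R..R. (Wc x N j * y powi j) / y)"
      using y0 by (intro sum.cong) (simp_all add: power_int_diff)
    also have "\<dots> = S / y" unfolding S_def by (rule sum_divide_distrib[symmetric])
    finally show ?thesis .
  qed
  have "(\<Sum>j=-R..R. Wc x (Suc N) j * y powi j)
      = (\<Sum>j=-R..R. (1 + B^2) * (Wc x N j * y powi j) + B * (Wc x N (j-1) * y powi j) + B * (Wc x N (j+1) * y powi j))"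
  proof (rule sum.cong)
    fix j
    have W: "Wc x (Suc N) j = (1 + B^2) * Wc x N j + B * (Wc x N (j-1) + Wc x N (j+1))"
      using Wc_rec[OF x1 x0, of N j] by (simp only: B2 B_def[symmetric])
    show "Wc x (Suc N) j * y powi j = (1 + B^2) * (Wc x N j * y powi j) + B * (Wc x N (j-1) * y powi j) + B * (Wc x N (j+1) * y powi j)"
      unfolding W by (simp add: algebra_simps)
  qed simp
  also have "\<dots> = (1 + B^2) * S + B * (y * S) + B * (S / y)"
    by (simp add: sum.distrib sum_distrib_left[symmetric] s1 s2 S_def)
  also have "\<dots> = PN x y (Suc N)"
    unfolding step IH by (simp add: algebra_simps)
  finally show ?case ..
qed


definition Einf :: "complex \<Rightarrow> complex" where
  "Einf p = prodinf (\<lambda>i. 1 - p^(Suc i))"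

lemma Epr_Suc_eq: "Epr p (Suc n) = (\<Prod>i\<le>n. 1 - p^(Suc i))"
  unfolding Epr_def atMost_atLeast0 by (subst prod.shift_bounds_cl_Suc_ivl[symmetric]) simp

lemma Epr_conv:
  fixes p :: complex
  assumes p: "norm p < 1"
  shows "convergent_prod (\<lambda>i. 1 - p^(Suc i))"
proof -
  have s: "summable (\<lambda>i. norm p * norm p ^ i)"
    by (rule summable_mult[OF summable_geometric]) (simp add: p)
  have e: "norm ((1 - p^(Suc i)) - 1) = norm p * norm p ^ i" for i
  proof -
    have "(1 - p^(Suc i)) - 1 = - (p^(Suc i))" by (simp add: algebra_simps)
    then have "norm ((1 - p^(Suc i)) - 1) = norm (p^(Suc i))" by (simp only: norm_minus_cancel)
    also have "\<dots> = norm p * norm p ^ i" by (simp only: power_Suc norm_mult norm_power)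
    finally show ?thesis .
  qed
  have "summable (\<lambda>i. norm ((1 - p^(Suc i)) - 1))" unfolding e by (rule s)
  then show ?thesis
    by (intro abs_convergent_prod_imp_convergent_prod summable_imp_abs_convergent_prod)
qed

lemma Epr_lim:
  assumes p: "norm p < 1"
  shows "(\<lambda>m. Epr p m) \<longlonglongrightarrow> Einf p"
proof -
  have "(\<lambda>n. \<Prod>i\<le>n. 1 - p^(Suc i)) \<longlonglongrightarrow> Einf p"
    unfolding Einf_def by (rule convergent_prod_LIMSEQ[OF Epr_conv[OF p]])
  then have "(\<lambda>n. Epr p (Suc n)) \<longlonglongrightarrow> Einf p" by (simp add: Epr_Suc_eq)
  then show ?thesis by (rule filterlim_sequentially_Suc[THEN iffD1])
qed

lemma Einf_nonzero:
  assumes p: "norm p < 1"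
  shows "Einf p \<noteq> 0"
  unfolding Einf_def
proof (rule prodinf_nonzero[OF Epr_conv[OF p]])
  fix i
  have "norm p ^ i \<le> 1" by (rule power_le_one) (use p in auto)
  then have "norm p * norm p ^ i \<le> norm p * 1" by (intro mult_left_mono) auto
  then have "norm (p^(Suc i)) < 1" using p unfolding power_Suc norm_mult norm_power by linarith
  show "1 - p^(Suc i) \<noteq> 0"
  proof
    assume "1 - p^(Suc i) = 0"
    then have "p^(Suc i) = 1" by simp
    then have "norm (p^(Suc i)) = 1" by (simp only: norm_one)
    with \<open>norm (p^(Suc i)) < 1\<close> show False by linarith
  qed
qed

lemma filterlim_nat_shift: "filterlim (\<lambda>N::nat. nat (int N + j)) at_top sequentially"
  unfolding filterlim_at_top
proof
  fix M :: nat
  show "eventually (\<lambda>N. M \<le> nat (int N + j)) sequentially"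
    unfolding eventually_sequentially by (rule exI[of _ "M + nat \<bar>j\<bar>"]) linarith
qed

lemma Ei_lim:
  assumes p: "norm p < 1"
  shows "(\<lambda>N::nat. Ei p (int N + j)) \<longlonglongrightarrow> 1 / Einf p"
proof -
  have "(\<lambda>m. 1 / Epr p m) \<longlonglongrightarrow> 1 / Einf p"
    by (intro tendsto_divide tendsto_const Epr_lim[OF p] Einf_nonzero[OF p])
  then have "(\<lambda>N. 1 / Epr p (nat (int N + j))) \<longlonglongrightarrow> 1 / Einf p"
    by (rule filterlim_compose[OF _ filterlim_nat_shift])
  moreover have ev: "eventually (\<lambda>N. 1 / Epr p (nat (int N + j)) = Ei p (int N + j)) sequentially"
    unfolding eventually_sequentially by (rule exI[of _ "nat \<bar>j\<bar>"]) (auto simp: Ei_def)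
  ultimately show ?thesis using tendsto_cong[OF ev] by blast
qed

lemma Ei_minus_lim:
  assumes p: "norm p < 1"
  shows "(\<lambda>N::nat. Ei p (int N - j)) \<longlonglongrightarrow> 1 / Einf p"
  using Ei_lim[OF p, of "-j"] by simp

lemma JTP_lim:
  fixes x :: complex and t :: "int \<Rightarrow> complex"
  assumes x1: "norm x < 1" and x0: "x \<noteq> 0"
    and a: "(\<lambda>j. norm (x powi (j^2) * t j)) summable_on UNIV"
  shows "(\<lambda>N. Epr (x^2) N * (\<Sum>j=-int N..int N. Wc x N j * t j)) \<longlonglongrightarrow> infsum (\<lambda>j. x powi (j^2) * t j) UNIV"
proof -
  define p where "p = x^2"
  have p: "norm p < 1" using x1 by (simp add: p_def norm_power power_less_one_iff)
  have "Bseq (\<lambda>m. Epr p m)" by (rule convergent_imp_Bseq[OF convergentI[OF Epr_lim[OF p]]])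
  then obtain K1 where K1: "K1 > 0" "\<And>m. norm (Epr p m) \<le> K1"
    unfolding Bseq_def by blast
  have "(\<lambda>m. 1 / Epr p m) \<longlonglongrightarrow> 1 / Einf p"
    by (intro tendsto_divide tendsto_const Epr_lim[OF p] Einf_nonzero[OF p])
  then have "Bseq (\<lambda>m. 1 / Epr p m)" by (rule convergent_imp_Bseq[OF convergentI])
  then obtain K2 where K2: "K2 > 0" "\<And>m. norm (1 / Epr p m) \<le> K2"
    unfolding Bseq_def by blast
  have Eib: "norm (Ei p m) \<le> K2" for m
    using K2 by (auto simp: Ei_def)
  define G where "G N j = Epr p N * Epr p (2*N) * Ei p (int N + j) * Ei p (int N - j)" for N j
  have Gb: "norm (G N j) \<le> K1 * K1 * K2 * K2" for N j
    unfolding G_def norm_mult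
    by (intro mult_mono K1 Eib) (use K1(1) K2(1) in auto)
  have Gl: "(\<lambda>N. G N j) \<longlonglongrightarrow> Einf p * Einf p * (1 / Einf p) * (1 / Einf p)" for j
  proof -
    have "(\<lambda>N. Epr p (2*N)) \<longlonglongrightarrow> Einf p"
      by (rule filterlim_compose[OF Epr_lim[OF p]]) (rule filterlim_subseq, simp add: strict_mono_def)
    then show ?thesis unfolding G_def
      by (intro tendsto_mult Epr_lim[OF p] Ei_lim[OF p] Ei_minus_lim[OF p])
  qed
  have one: "Einf p * Einf p * (1 / Einf p) * (1 / Einf p) = 1" using Einf_nonzero[OF p] by simp
  have T: "(\<lambda>N. \<Sum>j\<in>{- int N..int N}. G N j * (x powi (j^2) * t j)) \<longlonglongrightarrow> 1 * infsum (\<lambda>j. x powi (j^2) * t j) UNIV"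
    by (rule tannery_int[OF a Gb]) (use Gl one in simp)
  have "Epr (x^2) N * (\<Sum>j=-int N..int N. Wc x N j * t j) = (\<Sum>j\<in>{- int N..int N}. G N j * (x powi (j^2) * t j))" for N
    unfolding sum_distrib_left G_def Wc_def p_def by (intro sum.cong) (simp_all add: algebra_simps)
  then show ?thesis using T by simp
qed


lemma exp_pow: "exp a ^ n = exp (of_nat n * a)" for a :: complex
  by (rule exp_of_nat_mult[symmetric])

lemma norm_exp_lt1: "Re a < 0 \<Longrightarrow> norm (exp a) < 1"
  by simp

lemma PN_Suc: "PN x y (Suc N) = PN x y N * ((1 + x^(2*N+1)*y)*(1 + x^(2*N+1)/y))"
  by (simp add: PN_def)

lemma penta_fin:
  fixes L :: complex
  shows "Epr (exp (3*L) ^ 2) N * PN (exp (3*L)) (- exp L) N = Epr (exp (2*L)) (3*N)"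
proof (induction N)
  case 0 then show ?case by (simp add: PN_def)
next
  case (Suc N)
  have e3: "3 * Suc N = Suc (Suc (Suc (3*N)))" by simp
  have "Epr (exp (2*L)) (3 * Suc N) = Epr (exp (2*L)) (3*N) * ((1 - exp (2*L)^(Suc (3*N))) * (1 - exp (2*L)^(Suc (Suc (3*N)))) * (1 - exp (2*L)^(Suc (Suc (Suc (3*N))))))"
    unfolding e3 Epr_Suc by (simp add: mult.assoc)
  moreover have "Epr (exp (3*L) ^ 2) (Suc N) * PN (exp (3*L)) (- exp L) (Suc N)
      = (Epr (exp (3*L) ^ 2) N * PN (exp (3*L)) (- exp L) N) *
        ((1 - (exp (3*L) ^ 2)^(Suc N)) * ((1 + exp (3*L)^(2*N+1) * (- exp L)) * (1 + exp (3*L)^(2*N+1) / (- exp L))))"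
    by (simp only: Epr_Suc PN_Suc mult_ac)
  moreover have "(1 - (exp (3*L) ^ 2)^(Suc N)) * ((1 + exp (3*L)^(2*N+1) * (- exp L)) * (1 + exp (3*L)^(2*N+1) / (- exp L)))
      = (1 - exp (2*L)^(Suc (3*N))) * (1 - exp (2*L)^(Suc (Suc (3*N)))) * (1 - exp (2*L)^(Suc (Suc (Suc (3*N)))))"
  proof -
    have a: "(exp (3*L) ^ 2)^(Suc N) = exp (2*L)^(Suc (Suc (Suc (3*N))))"
      unfolding exp_pow by (simp add: algebra_simps)
    have b: "exp (3*L)^(2*N+1) * exp L = exp (2*L)^(Suc (Suc (3*N)))"
      unfolding exp_pow by (simp add: exp_add[symmetric] algebra_simps)
    have c: "exp (3*L)^(2*N+1) / exp L = exp (2*L)^(Suc (3*N))"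
      unfolding exp_pow by (simp add: exp_diff[symmetric] algebra_simps)
    show ?thesis using a b c by (simp add: algebra_simps)
  qed
  ultimately show ?case using Suc.IH by simp
qed


lemma Epr_3N_lim:
  assumes p: "norm p < 1"
  shows "(\<lambda>N. Epr p (3*N)) \<longlonglongrightarrow> Einf p"
  by (rule filterlim_compose[OF Epr_lim[OF p]]) (rule filterlim_subseq, simp add: strict_mono_def)

theorem pentagonal:
  fixes L :: complex
  assumes L: "Re L < 0"
  shows "thE (3*L) (L + of_real pi * \<i>) = Einf (exp (2*L))"
proof -
  define x where "x = exp (3*L)"
  define y where "y = - exp L"
  have x1: "norm x < 1" using L by (simp add: x_def)
  have x0: "x \<noteq> 0" by (simp add: x_def)
  have y0: "y \<noteq> 0" by (simp add: y_def)
  have ye: "y = exp (L + of_real pi * \<i>)" by (simp add: y_def exp_add)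
  have q1: "norm (exp (2*L)) < 1" using L by simp
  have tm: "x powi (j^2) * y powi j = exp ((of_int j)^2 * (3*L) + of_int j * (L + of_real pi * \<i>))" for j
    unfolding x_def ye by (rule exp_term_eq[symmetric])
  have summ: "(\<lambda>j. norm (x powi (j^2) * y powi j)) summable_on UNIV"
    unfolding tm by (rule thE_summable1) (use L in simp)
  have lim1: "(\<lambda>N. Epr (x^2) N * (\<Sum>j=-int N..int N. Wc x N j * y powi j)) \<longlonglongrightarrow> infsum (\<lambda>j. x powi (j^2) * y powi j) UNIV"
    by (rule JTP_lim[OF x1 x0 summ])
  have eq: "Epr (x^2) N * (\<Sum>j=-int N..int N. Wc x N j * y powi j) = Epr (exp (2*L)) (3*N)" for N
  proof -
    have "(\<Sum>j=-int N..int N. Wc x N j * y powi j) = PN x y N"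
      by (rule JTP_fin[OF x1 x0 y0, symmetric]) simp
    then show ?thesis using penta_fin[of L N] by (simp add: x_def y_def)
  qed
  have "infsum (\<lambda>j. x powi (j^2) * y powi j) UNIV = thE (3*L) (L + of_real pi * \<i>)"
    unfolding thE_def tm ..
  moreover have "(\<lambda>N. Epr (exp (2*L)) (3*N)) \<longlonglongrightarrow> infsum (\<lambda>j. x powi (j^2) * y powi j) UNIV"
    using lim1 unfolding eq .
  ultimately show ?thesis using LIMSEQ_unique[OF _ Epr_3N_lim[OF q1]] by metis
qed


definition RN :: "complex \<Rightarrow> complex \<Rightarrow> nat \<Rightarrow> complex" where
  "RN x y N = (\<Prod>k=1..N. (1 + x^(2*k-1) * y)) * (\<Prod>k=2..N. (1 + x^(2*k-1) / y))"

lemma PN_RN: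
  assumes "N \<ge> 1"
  shows "PN x y N = (1 + x/y) * RN x y N"
proof -
  have B: "(\<Prod>k=1..N. (1 + x^(2*k-1) / y)) = (1 + x/y) * (\<Prod>k=2..N. (1 + x^(2*k-1) / y))"
  proof -
    have e: "{1..N} = insert 1 {2..N}" using assms by auto
    show ?thesis unfolding e by (subst prod.insert) auto
  qed
  have "PN x y N = (\<Prod>k=1..N. (1 + x^(2*k-1) * y)) * (\<Prod>k=1..N. (1 + x^(2*k-1) / y))"
    unfolding PN_def by (rule prod.distrib)
  also have "\<dots> = (1 + x/y) * RN x y N" unfolding B RN_def by (simp only: mult_ac)
  finally show ?thesis .
qed

lemma RN_y0:
  fixes x :: complex
  assumes x0: "x \<noteq> 0" and N: "N \<ge> 1"
  shows "RN x (-x) N = Epr (x^2) N * Epr (x^2) (N - 1)"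
proof -
  have a: "(\<Prod>k=1..N. (1 + x^(2*k-1) * (-x))) = Epr (x^2) N"
    unfolding Epr_def
  proof (rule prod.cong)
    fix k assume "k \<in> {1..N}"
    then have "x^(2*k-1) * x = x^(2*k)" by (cases k) auto
    then show "1 + x^(2*k-1) * (-x) = 1 - (x^2)^k" by (simp add: power_mult)
  qed simp
  obtain M where M: "N = Suc M" using N by (cases N) auto
  have b: "(\<Prod>k=2..N. (1 + x^(2*k-1) / (-x))) = Epr (x^2) (N - 1)"
  proof -
    have e: "{2..N} = {Suc 1..Suc M}" by (simp add: M)
    have "(\<Prod>k=2..N. (1 + x^(2*k-1) / (-x))) = (\<Prod>k=Suc 1..Suc M. (1 + x^(2*k-1) / (-x)))"
      by (simp only: e)
    also have "\<dots> = (\<Prod>i=1..M. (1 + x^(2*Suc i-1) / (-x)))"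
      by (rule prod.shift_bounds_cl_Suc_ivl)
    also have "\<dots> = Epr (x^2) M"
      unfolding Epr_def
    proof (rule prod.cong)
      fix i assume "i \<in> {1..M}"
      have "x^(2*Suc i-1) = x^(2*i) * x" by (simp add: mult_ac)
      then have "x^(2*Suc i-1) / x = x^(2*i)" using x0 by simp
      then show "1 + x^(2*Suc i-1) / (-x) = 1 - (x^2)^i" by (simp add: power_mult)
    qed simp
    finally show ?thesis by (simp add: M)
  qed
  show ?thesis unfolding RN_def a b ..
qed

lemma RN_deriv_exists:
  fixes x y0 :: complex
  assumes y0: "y0 \<noteq> 0"
  shows "\<exists>D. ((\<lambda>u. RN x u N) has_field_derivative D) (at y0)"
proof -
  have d1: "((\<lambda>u. \<Prod>k\<in>{1..N}. 1 + x^(2*k-1) * u) has_field_derivative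
       (\<Sum>k\<in>{1..N}. x^(2*k-1) * (\<Prod>i\<in>{1..N}-{k}. 1 + x^(2*i-1) * y0))) (at y0)"
    by (rule has_field_derivative_prod) (auto intro!: derivative_eq_intros)
  have d2: "((\<lambda>u. \<Prod>k\<in>{2..N}. 1 + x^(2*k-1) / u) has_field_derivative
       (\<Sum>k\<in>{2..N}. (-(x^(2*k-1)) / y0^2) * (\<Prod>i\<in>{2..N}-{k}. 1 + x^(2*i-1) / y0))) (at y0)"
    by (rule has_field_derivative_prod) (use y0 in \<open>auto intro!: derivative_eq_intros simp: power2_eq_square field_simps\<close>)
  show ?thesis unfolding RN_def using DERIV_mult[OF d1 d2] by blast
qed

lemma F_deriv:
  fixes c :: "int \<Rightarrow> complex" and y0 :: complex
  assumes y0: "y0 \<noteq> 0"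
  shows "((\<lambda>y. \<Sum>j\<in>S. c j * y powi j) has_field_derivative (\<Sum>j\<in>S. c j * (of_int j * y0 powi (j-1)))) (at y0)"
proof (rule DERIV_sum)
  fix j
  have "((\<lambda>y. y powi j) has_field_derivative of_int j * y0 powi (j-1)) (at y0)"
    using DERIV_power_int[OF DERIV_ident, where x=y0 and n=j and s=UNIV] y0 by simp
  then show "((\<lambda>y. c j * y powi j) has_field_derivative c j * (of_int j * y0 powi (j-1))) (at y0)"
    by (rule DERIV_cmult)
qed

lemma RN_sum:
  fixes x :: complex
  assumes x1: "norm x < 1" and x0: "x \<noteq> 0" and N: "N \<ge> 1"
  shows "RN x (-x) N = (\<Sum>j=-int N..int N. Wc x N j * (of_int j * (-x) powi j))"
proof -
  define y0 where "y0 = -x"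
  have y0: "y0 \<noteq> 0" using x0 by (simp add: y0_def)
  define F where "F y = (\<Sum>j=-int N..int N. Wc x N j * y powi j)" for y
  define G where "G y = (1 + x/y) * RN x y N" for y
  obtain D where D: "((\<lambda>u. RN x u N) has_field_derivative D) (at y0)"
    using RN_deriv_exists[OF y0] by blast
  have dF: "(F has_field_derivative (\<Sum>j=-int N..int N. Wc x N j * (of_int j * y0 powi (j-1)))) (at y0)"
    unfolding F_def by (rule F_deriv[OF y0])
  have FG: "F y = G y" if "y \<in> - {0}" for y
  proof -
    have "y \<noteq> 0" using that by simp
    then have "F y = PN x y N" unfolding F_def by (intro JTP_fin[OF x1 x0, symmetric]) simp_all
    also have "\<dots> = G y" unfolding G_def by (rule PN_RN[OF N])
    finally show ?thesis .
  qed
  have dG1: "(G has_field_derivative (\<Sum>j=-int N..int N. Wc x N j * (of_int j * y0 powi (j-1)))) (at y0)"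
  proof (rule has_field_derivative_transform_within_open[OF dF _ _ FG])
    show "open (- {0::complex})" by (rule open_Compl) (rule closed_singleton)
    show "y0 \<in> - {0}" using y0 by simp
  qed
  have dq: "((\<lambda>y. 1 + x/y) has_field_derivative (- x / y0^2)) (at y0)"
    using y0 by (auto intro!: derivative_eq_intros simp: power2_eq_square field_simps)
  have dG2: "(G has_field_derivative ((- x / y0^2) * RN x y0 N + D * (1 + x/y0))) (at y0)"
    unfolding G_def by (rule DERIV_mult[OF dq D])
  have "(\<Sum>j=-int N..int N. Wc x N j * (of_int j * y0 powi (j-1))) = (- x / y0^2) * RN x y0 N + D * (1 + x/y0)"
    by (rule DERIV_unique[OF dG1 dG2])
  also have "1 + x/y0 = 0" using x0 by (simp add: y0_def)
  also have "y0^2 = x^2" by (simp add: y0_def)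
  finally have E: "(\<Sum>j=-int N..int N. Wc x N j * (of_int j * y0 powi (j-1))) = - RN x y0 N / x"
    using x0 by (simp add: power2_eq_square)
  have "RN x y0 N = y0 * (\<Sum>j=-int N..int N. Wc x N j * (of_int j * y0 powi (j-1)))"
    unfolding E using x0 by (simp add: y0_def)
  also have "\<dots> = (\<Sum>j=-int N..int N. Wc x N j * (of_int j * y0 powi j))"
    unfolding sum_distrib_left
  proof (rule sum.cong)
    fix j :: int
    have "y0 * y0 powi (j-1) = y0 powi j"
      using y0 by (simp add: power_int_diff)
    then show "y0 * (Wc x N j * (of_int j * y0 powi (j-1))) = Wc x N j * (of_int j * y0 powi j)"
      by (simp add: mult_ac)
  qed simp
  finally show ?thesis by (simp add: y0_def)
qed


lemma Epr_pred_lim: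
  assumes p: "norm p < 1"
  shows "(\<lambda>N. Epr p (N - 1)) \<longlonglongrightarrow> Einf p"
  by (rule filterlim_sequentially_Suc[THEN iffD1]) (simp add: Epr_lim[OF p])

theorem jacobi:
  fixes L :: complex
  assumes L: "Re L < 0"
  shows "thdE L (L + of_real pi * \<i>) = Einf (exp (2*L)) ^ 3"
proof -
  define x where "x = exp L"
  have x1: "norm x < 1" using L by (simp add: x_def)
  have x0: "x \<noteq> 0" by (simp add: x_def)
  have ye: "-x = exp (L + of_real pi * \<i>)" by (simp add: x_def exp_add)
  have x2: "x^2 = exp (2*L)" unfolding x_def exp_pow by simp
  have q1: "norm (x^2) < 1" using L by (simp add: x2)
  have tm: "x powi (j^2) * (of_int j * (-x) powi j) = of_int j * exp ((of_int j)^2 * L + of_int j * (L + of_real pi * \<i>))" for j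
  proof -
    have "x powi (j^2) * (of_int j * (-x) powi j) = of_int j * (exp L powi (j^2) * exp (L + of_real pi * \<i>) powi j)"
      unfolding ye[symmetric] x_def by (simp only: mult_ac)
    also have "\<dots> = of_int j * exp ((of_int j)^2 * L + of_int j * (L + of_real pi * \<i>))"
      by (simp only: exp_term_eq)
    finally show ?thesis .
  qed
  have summ: "(\<lambda>j. norm (x powi (j^2) * (of_int j * (-x) powi j))) summable_on UNIV"
    unfolding tm by (rule thdE_summable1[OF L])
  have lim1: "(\<lambda>N. Epr (x^2) N * (\<Sum>j=-int N..int N. Wc x N j * (of_int j * (-x) powi j))) \<longlonglongrightarrow> infsum (\<lambda>j. x powi (j^2) * (of_int j * (-x) powi j)) UNIV"
    by (rule JTP_lim[OF x1 x0 summ])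
  have inf: "infsum (\<lambda>j. x powi (j^2) * (of_int j * (-x) powi j)) UNIV = thdE L (L + of_real pi * \<i>)"
    unfolding thdE_def tm ..
  have ev: "eventually (\<lambda>N. Epr (x^2) N * (Epr (x^2) N * Epr (x^2) (N - 1)) = Epr (x^2) N * (\<Sum>j=-int N..int N. Wc x N j * (of_int j * (-x) powi j))) sequentially"
    unfolding eventually_sequentially
  proof (intro exI[of _ 1] allI impI)
    fix N :: nat assume N: "N \<ge> 1"
    show "Epr (x^2) N * (Epr (x^2) N * Epr (x^2) (N - 1)) = Epr (x^2) N * (\<Sum>j=-int N..int N. Wc x N j * (of_int j * (-x) powi j))"
      using RN_y0[OF x0 N] RN_sum[OF x1 x0 N] by simp
  qed
  have lim2: "(\<lambda>N. Epr (x^2) N * (Epr (x^2) N * Epr (x^2) (N - 1))) \<longlonglongrightarrow> Einf (x^2) * (Einf (x^2) * Einf (x^2))"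
    by (intro tendsto_mult Epr_lim[OF q1] Epr_pred_lim[OF q1])
  have lim3: "(\<lambda>N. Epr (x^2) N * (\<Sum>j=-int N..int N. Wc x N j * (of_int j * (-x) powi j))) \<longlonglongrightarrow> Einf (x^2) * (Einf (x^2) * Einf (x^2))"
    using tendsto_cong[OF ev] lim2 by blast
  have "thdE L (L + of_real pi * \<i>) = Einf (x^2) * (Einf (x^2) * Einf (x^2))"
    using LIMSEQ_unique[OF lim1 lim3] inf by simp
  then show ?thesis by (simp add: x2 power3_eq_cube)
qed


lemma theta3_thE:
  "theta3 z T = thE (of_real pi * \<i> * T) (2 * of_real pi * \<i> * z)"
  unfolding theta3_def thE_def
proof (rule infsum_cong)
  fix n :: int
  have "2 * of_real pi * \<i> * ((of_int n)^2 / 2) * T + 2 * of_real pi * \<i> * of_int n * z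
      = (of_int n)^2 * (of_real pi * \<i> * T) + of_int n * (2 * of_real pi * \<i> * z)"
    by (simp add: field_simps)
  then show "qpow T ((of_int n)^2 / 2) * exp (of_real (2 * pi) * \<i> * of_int n * z) =
        exp ((of_int n)^2 * (of_real pi * \<i> * T) + of_int n * (2 * of_real pi * \<i> * z))"
    unfolding qpow_def of_real_mult of_real_numeral by (simp only: exp_add[symmetric])
qed

lemma a_lattice_LamE: "a_lattice tau = LamE (of_real pi * \<i> * tau)"
  unfolding a_lattice_def LamE_def
proof (rule infsum_cong)
  fix p :: "int \<times> int"
  obtain k l where p: "p = (k,l)" by (cases p)
  have "qpow tau (of_int (k^2 + k*l + l^2)) = exp (of_int (k^2 + k*l + l^2) * (2 * (of_real pi * \<i> * tau)))"
    unfolding qpow_def by (rule arg_cong[where f=exp]) (simp add: algebra_simps)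
  then show "(case p of (k,l) \<Rightarrow> qpow tau (of_int (k^2 + k*l + l^2))) = (case p of (k,l) \<Rightarrow> exp (of_int (k^2 + k*l + l^2) * (2 * (of_real pi * \<i> * tau))))"
    unfolding p by simp
qed

lemma minus_one_powi: "(-1::complex) powi n = (-1)^nat \<bar>n\<bar>"
  by (cases "n \<ge> 0") (simp_all add: power_int_def)

lemma eta_Einf:
  "dedekind_eta tau = exp (of_real pi * \<i> * tau / 12) * Einf (exp (2 * (of_real pi * \<i> * tau)))"
proof -
  have a: "qpow tau (1/24) = exp (of_real pi * \<i> * tau / 12)"
    unfolding qpow_def by (simp add: field_simps)
  have b: "qpow tau (of_nat (Suc n)) = exp (2 * (of_real pi * \<i> * tau)) ^ (Suc n)" for n
    unfolding qpow_def exp_pow by (simp add: algebra_simps)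
  show ?thesis unfolding dedekind_eta_def Einf_def a b ..
qed

lemma S_eq:
  fixes L :: complex
  assumes L: "L = of_real pi * \<i> * tau" and Lneg: "Re L < 0"
  shows "(\<Sum>\<^sub>\<infinity>n::int. (-1) ^ nat \<bar>n\<bar> * of_int (6*n+1) * qpow tau (of_int ((6*n+1)^2) / 24))
       = exp (L / 12) * (thE (3*L) (L + of_real pi * \<i>) + 6 * thdE (3*L) (L + of_real pi * \<i>))"
proof -
  define e where "e n = exp ((of_int n)^2 * (3*L) + of_int n * (L + of_real pi * \<i>))" for n :: int
  have L3: "Re (3*L) < 0" using Lneg by simp
  have tmq: "(-1) ^ nat \<bar>n\<bar> * of_int (6*n+1) * qpow tau (of_int ((6*n+1)^2) / 24)
      = exp (L / 12) * (e n + 6 * (of_int n * e n))" for n :: int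
  proof -
    have s: "(-1::complex) ^ nat \<bar>n\<bar> = exp (of_int n * (of_real pi * \<i>))"
      using exp_pi_int[of n] minus_one_powi[of n] by simp
    have "(-1) ^ nat \<bar>n\<bar> * qpow tau (of_int ((6*n+1)^2) / 24) = exp (L / 12 + ((of_int n)^2 * (3*L) + of_int n * (L + of_real pi * \<i>)))"
    proof -
      have "of_int n * (of_real pi * \<i>) + 2 * of_real pi * \<i> * (of_int ((6*n+1)^2) / 24) * tau
          = L / 12 + ((of_int n)^2 * (3*L) + of_int n * (L + of_real pi * \<i>))"
        unfolding L by (simp add: field_simps power2_eq_square)
      then show ?thesis unfolding s qpow_def of_real_mult of_real_numeral by (simp only: exp_add[symmetric])
    qed
    then show ?thesis unfolding e_def by (simp add: exp_add algebra_simps)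
  qed
  have s1: "e summable_on UNIV"
    unfolding e_def by (rule abs_summable_summable[OF thE_summable1[OF L3]])
  have s2: "(\<lambda>n. 6 * (of_int n * e n)) summable_on UNIV"
    unfolding e_def by (intro summable_on_cmult_right abs_summable_summable[OF thdE_summable1[OF L3]])
  have "(\<Sum>\<^sub>\<infinity>n::int. (-1) ^ nat \<bar>n\<bar> * of_int (6*n+1) * qpow tau (of_int ((6*n+1)^2) / 24))
      = (\<Sum>\<^sub>\<infinity>n::int. exp (L / 12) * (e n + 6 * (of_int n * e n)))"
    unfolding tmq ..
  also have "\<dots> = exp (L / 12) * (\<Sum>\<^sub>\<infinity>n::int. e n + 6 * (of_int n * e n))"
    by (rule infsum_cmult_right')
  also have "(\<Sum>\<^sub>\<infinity>n::int. e n + 6 * (of_int n * e n)) = infsum e UNIV + infsum (\<lambda>n. 6 * (of_int n * e n)) UNIV"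
    by (rule infsum_add[OF s1 s2])
  also have "infsum (\<lambda>n. 6 * (of_int n * e n)) UNIV = 6 * infsum (\<lambda>n. of_int n * e n) UNIV"
    by (rule infsum_cmult_right')
  finally show ?thesis unfolding e_def thE_def thdE_def .
qed


theorem lemma49:
  fixes tau z :: complex
  assumes "Im tau > 0"
  shows "theta3 z (3*tau) ^ 3
           + qpow tau (1/2) * exp (2*pi*\<i>*z) * theta3 (z + tau) (3*tau) ^ 3
           + qpow tau 2 * exp (2*pi*\<i>*z) ^ 2 * theta3 (z + 2*tau) (3*tau) ^ 3
         = a_eta tau * theta3 z tau
       \<and> a_eta tau = a_lattice tau"
proof -
  define L where "L = of_real pi * \<i> * tau"
  define M where "M = 2 * of_real pi * \<i> * z"
  have Lneg: "Re L < 0" using assms by (simp add: L_def)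
  have t0: "theta3 z (3*tau) = thE (3*L) M"
    unfolding theta3_thE L_def M_def by (simp add: algebra_simps)
  have t1: "theta3 (z + tau) (3*tau) = thE (3*L) (M + 2*L)"
    unfolding theta3_thE L_def M_def by (simp add: algebra_simps)
  have t2: "theta3 (z + 2*tau) (3*tau) = thE (3*L) (M + 4*L)"
    unfolding theta3_thE L_def M_def by (simp add: algebra_simps)
  have t3: "theta3 z tau = thE L M"
    unfolding theta3_thE L_def M_def ..
  have c1: "qpow tau (1/2) * exp (2*pi*\<i>*z) = exp (L + M)"
    unfolding qpow_def exp_add[symmetric] L_def M_def by (rule arg_cong[where f=exp]) (simp add: algebra_simps)
  have c2: "qpow tau 2 * exp (2*pi*\<i>*z) ^ 2 = exp (4*L + 2*M)"
    unfolding qpow_def exp_pow exp_add[symmetric] L_def M_def by (rule arg_cong[where f=exp]) (simp add: algebra_simps)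
  have lat: "a_lattice tau = LamE L" unfolding L_def by (rule a_lattice_LamE)
  have A: "theta3 z (3*tau) ^ 3
           + qpow tau (1/2) * exp (2*pi*\<i>*z) * theta3 (z + tau) (3*tau) ^ 3
           + qpow tau 2 * exp (2*pi*\<i>*z) ^ 2 * theta3 (z + 2*tau) (3*tau) ^ 3
         = a_lattice tau * theta3 z tau"
    unfolding t0 t1 t2 t3 c1 c2 lat A_plain[OF Lneg] by (simp add: mult.commute)
  define E where "E = Einf (exp (2*L))"
  have q1: "norm (exp (2*L)) < 1" using Lneg by simp
  have E0: "E \<noteq> 0" unfolding E_def by (rule Einf_nonzero[OF q1])
  define T0 where "T0 = thE (3*L) (L + of_real pi * \<i>)"
  define D0 where "D0 = thdE (3*L) (L + of_real pi * \<i>)"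
  have T0E: "T0 = E" unfolding T0_def E_def by (rule pentagonal[OF Lneg])
  have JE: "thdE L (L + of_real pi * \<i>) = E ^ 3" unfolding E_def by (rule jacobi[OF Lneg])
  have B: "T0^2 * (T0 + 6 * D0) = E^3 * LamE L"
    using B_eval[OF Lneg] JE unfolding T0_def D0_def by simp
  then have "E^2 * (T0 + 6 * D0) = E^2 * (E * LamE L)"
    unfolding T0E by (simp add: power3_eq_cube power2_eq_square mult_ac)
  then have S: "T0 + 6 * D0 = E * LamE L" using E0 by simp
  have eta: "dedekind_eta tau = exp (L / 12) * E"
    unfolding eta_Einf E_def L_def ..
  have Seq: "(\<Sum>\<^sub>\<infinity>n::int. (-1) ^ nat \<bar>n\<bar> * of_int (6*n+1) * qpow tau (of_int ((6*n+1)^2) / 24))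
       = exp (L / 12) * (T0 + 6 * D0)"
    unfolding T0_def D0_def by (rule S_eq[OF L_def Lneg])
  have aeta: "a_eta tau = a_lattice tau"
    unfolding a_eta_def Seq eta S lat using E0 by simp
  show ?thesis using A aeta by simp
qed


end
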